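(* Let $\mathbf{T}$ be a totally ordered set, $\Bbbk$ a field, and let $F:\mathbb{U}\to\mathbb{V}$, $G:\mathbb{T}'\to\mathbb{W}$, $\varphi_1:\mathbb{T}'\to\mathbb{U}$, $\varphi_2:\mathbb{V}\to\mathbb{W}$ be homomorphisms of pointwise finite-dimensional $\mathbf{T}$-persistence modules with $G=\varphi_2\circ F\circ\varphi_1$. Let $F_\varphi:=F|_{\mathrm{im}\,\varphi_1}:\mathrm{im}\,\varphi_1\to\mathrm{im}\,F$, $\varphi_F:=\varphi_2|_{\mathrm{im}\,F}:\mathrm{im}\,F\to\mathrm{im}\,\varphi_2$, and $\varphi_*:=\varphi_2|_{\mathrm{im}\,F_\varphi}:\mathrm{im}\,F_\varphi\to\mathrm{im}\,\varphi_F$ (so $\mathrm{im}\,\varphi_*=\mathrm{im}\,G$). Define the matchings \[\mathcal{M}_\varphi:=\mathcal{J}_{F_\varphi}\circ\overline{\mathcal{Q}_{\varphi_*}}:\mathcal{B}_G\nrightarrow\mathcal{B}_F,\qquad \mathcal{E}_\varphi:=\overline{\mathcal{J}_{\varphi_*}}\circ\mathcal{Q}_{\varphi_F}:\mathcal{B}_F\nrightarrow\mathcal{B}_G.\] Then $\mathcal{M}_\varphi$ and $\overline{\mathcal{E}_\varphi}$ are injective sub-barcode matchings $\mathcal{B}_G\nrightarrow\mathcal{B}_F$.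
   Context: Persistence modules, p.f.d., intervals (nonempty convex subsets of $\mathbf{T}$), barcodes $\mathcal{B}_\mathbb{V}:\mathrm{Rep}(\mathcal{B}_\mathbb{V})\to\mathcal{I}_{\mathbf{T}}$ of p.f.d. modules (from the interval decomposition $\mathbb{V}\cong\bigoplus_\beta\Bbbk_{\mathcal{B}_\mathbb{V}(\beta)}$), and $\mathcal{B}_H:=\mathcal{B}_{\mathrm{im}\,H}$ for a homomorphism $H$, are as usual. A matching is a relation in which each element is related to at most one element; a barcode matching $M:\mathcal{A}\nrightarrow\mathcal{B}$ is a matching $M\subseteq\mathrm{Rep}(\mathcal{A})\times\mathrm{Rep}(\mathcal{B})$ with $\mathcal{A}(\alpha)\cap\mathcal{B}(\beta)\neq\emptyset$ for matched pairs. Composition of barcode matchings is $N\circ M=\{(\alpha,\gamma):\exists\beta,(\alpha,\beta)\in M,(\beta,\gamma)\in N,\ \mathcal{A}(\alpha)\cap\mathcal{C}(\gamma)\neq\emptyset\}$. The reverse of a relation $R$ is $\overline{R}=\{(b,a):(a,b)\in R\}$. A matching is injective if every bar of the domain is matched; a sub-barcode matching satisfies $\mathcal{A}(\alpha)\subseteq\mathcal{B}(\beta)$ for all matched pairs. For a homomorphism $H$ with epi–mono factorization $\mathrm{dom}\,H\xrightarrow{q_H}\mathrm{im}\,H\xrightarrow{j_H}\mathrm{cod}\,H$, $\mathcal{J}_H$ and $\mathcal{Q}_H$ denote the Bauer–Lesnick induced matchings of $j_H$ and $q_H$: for a monomorphism $m:\mathbb{X}\hookrightarrow\mathbb{Y}$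 of p.f.d. $\mathbf{T}$-modules, $\mathcal{J}(m):\mathcal{B}_\mathbb{X}\nrightarrow\mathcal{B}_\mathbb{Y}$ is obtained by grouping bars according to the upper end of their interval, ordering the bars with a given upper end in each barcode by decreasing interval (by inclusion), and matching the $i$-th bar of $\mathcal{B}_\mathbb{X}$ to the $i$-th bar of $\mathcal{B}_\mathbb{Y}$; dually, for an epimorphism $e:\mathbb{X}\twoheadrightarrow\mathbb{Y}$, $\mathcal{Q}(e)$ groups bars by lower end, orders by decreasing interval, and matches $i$-th to $i$-th. These are canonical (depending only on the existence of the mono/epi), $\mathcal{J}(m)$ is injective with $\mathcal{B}_\mathbb{X}(\alpha)\subseteq\mathcal{B}_\mathbb{Y}(\beta)$ for matched pairs, and $\mathcal{Q}(e)$ is coinjective (every bar of $\mathcal{B}_\mathbb{Y}$ matched) with $\mathcal{B}_\mathbb{X}(\alpha)\supseteq\mathcal{B}_\mathbb{Y}(\beta)$ for matched pairs. *)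

theory Defs
  imports Complex_Main
begin

text \<open>A T-persistence module over the field 'k is represented concretely by
  a family of subspaces V t of an ambient 'k-vector space (type 'v with scalar
  multiplication sc) together with structure maps f s t : V s \<rightarrow> V t for s \<le> t.
  Values of the maps outside the carriers are irrelevant.\<close>

definition pers_module ::
  "('k::field \<Rightarrow> 'v::ab_group_add \<Rightarrow> 'v) \<Rightarrow> ('t::linorder \<Rightarrow> 'v set) \<Rightarrow> ('t \<Rightarrow> 't \<Rightarrow> 'v \<Rightarrow> 'v) \<Rightarrow> bool"
where
  "pers_module sc V f \<longleftrightarrow>
     vector_space sc \<and>
     (\<forall>t. module.subspace sc (V t)) \<and>
     (\<forall>s t. s \<le> t \<longrightarrow>
        (\<forall>x\<in>V s. f s t x \<in> V t) \<and>
        (\<forall>x\<in>V s. \<forall>y\<in>V s. f s t (x + y) = f s t x + f s t y) \<and>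
        (\<forall>c. \<forall>x\<in>V s. f s t (sc c x) = sc c (f s t x))) \<and>
     (\<forall>t. \<forall>x\<in>V t. f t t x = x) \<and>
     (\<forall>s t u. s \<le> t \<longrightarrow> t \<le> u \<longrightarrow> (\<forall>x\<in>V s. f s u x = f t u (f s t x)))"

definition pfd :: "('k::field \<Rightarrow> 'v::ab_group_add \<Rightarrow> 'v) \<Rightarrow> ('t \<Rightarrow> 'v set) \<Rightarrow> bool" where
  "pfd sc V \<longleftrightarrow> (\<forall>t. \<exists>B. finite B \<and> B \<subseteq> V t \<and> module.span sc B = V t)"

definition pm_hom ::
  "('k::field \<Rightarrow> 'v::ab_group_add \<Rightarrow> 'v) \<Rightarrow> ('t::linorder \<Rightarrow> 'v set) \<Rightarrow> ('t \<Rightarrow> 't \<Rightarrow> 'v \<Rightarrow> 'v) \<Rightarrow>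
   ('k \<Rightarrow> 'w::ab_group_add \<Rightarrow> 'w) \<Rightarrow> ('t \<Rightarrow> 'w set) \<Rightarrow> ('t \<Rightarrow> 't \<Rightarrow> 'w \<Rightarrow> 'w) \<Rightarrow>
   ('t \<Rightarrow> 'v \<Rightarrow> 'w) \<Rightarrow> bool"
where
  "pm_hom scV V f scW W g H \<longleftrightarrow>
     pers_module scV V f \<and> pers_module scW W g \<and>
     (\<forall>t. \<forall>x\<in>V t. H t x \<in> W t) \<and>
     (\<forall>t. \<forall>x\<in>V t. \<forall>y\<in>V t. H t (x + y) = H t x + H t y) \<and>
     (\<forall>t c. \<forall>x\<in>V t. H t (scV c x) = scW c (H t x)) \<and>
     (\<forall>s t. s \<le> t \<longrightarrow> (\<forall>x\<in>V s. H t (f s t x) = g s t (H s x)))"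

text \<open>Carriers of the image submodule im H of a homomorphism H with domain carriers V
  (the image is a submodule of the codomain, with the codomain's structure maps).
  Thus for a homomorphism H and a submodule given by carriers X of its domain,
  img H X is the image of the restriction of H to X.\<close>
definition img :: "('t \<Rightarrow> 'v \<Rightarrow> 'w) \<Rightarrow> ('t \<Rightarrow> 'v set) \<Rightarrow> 't \<Rightarrow> 'w set" where
  "img H V t = H t ` V t"

definition interval :: "'t::linorder set \<Rightarrow> bool" where
  "interval I \<longleftrightarrow> I \<noteq> {} \<and> (\<forall>x\<in>I. \<forall>z\<in>I. \<forall>y. x \<le> y \<and> y \<le> z \<longrightarrow> y \<in> I)"

text \<open>(R, I) is a barcode of (V,f): there is an isomorphism from the direct sum of the
  interval modules k_{I \<beta>}, \<beta> \<in> R, onto V.\<close>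
definition is_barcode ::
  "('k::field \<Rightarrow> 'v::ab_group_add \<Rightarrow> 'v) \<Rightarrow> ('t::linorder \<Rightarrow> 'v set) \<Rightarrow> ('t \<Rightarrow> 't \<Rightarrow> 'v \<Rightarrow> 'v) \<Rightarrow>
   'r set \<Rightarrow> ('r \<Rightarrow> 't set) \<Rightarrow> bool"
where
  "is_barcode sc V f R I \<longleftrightarrow>
     (\<forall>\<beta>\<in>R. interval (I \<beta>)) \<and>
     (\<exists>e :: 'r \<Rightarrow> 't \<Rightarrow> 'v.
        (\<forall>\<beta>\<in>R. \<forall>t\<in>I \<beta>. e \<beta> t \<in> V t) \<and>
        (\<forall>\<beta>\<in>R. \<forall>s t. s \<le> t \<longrightarrow> s \<in> I \<beta> \<longrightarrow>
            f s t (e \<beta> s) = (if t \<in> I \<beta> then e \<beta> t else 0)) \<and>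
        (\<forall>t. inj_on (\<lambda>\<beta>. e \<beta> t) {\<beta>\<in>R. t \<in> I \<beta>} \<and>
             \<not> module.dependent sc ((\<lambda>\<beta>. e \<beta> t) ` {\<beta>\<in>R. t \<in> I \<beta>}) \<and>
             module.span sc ((\<lambda>\<beta>. e \<beta> t) ` {\<beta>\<in>R. t \<in> I \<beta>}) = V t))"

definition barcode_matching ::
  "'a set \<Rightarrow> ('a \<Rightarrow> 't set) \<Rightarrow> 'b set \<Rightarrow> ('b \<Rightarrow> 't set) \<Rightarrow> ('a \<times> 'b) set \<Rightarrow> bool" where
  "barcode_matching RA A RB B M \<longleftrightarrow>
     M \<subseteq> RA \<times> RB \<and>
     (\<forall>a b b'. (a, b) \<in> M \<longrightarrow> (a, b') \<in> M \<longrightarrow> b = b') \<and>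
     (\<forall>a a' b. (a, b) \<in> M \<longrightarrow> (a', b) \<in> M \<longrightarrow> a = a') \<and>
     (\<forall>(a, b)\<in>M. A a \<inter> B b \<noteq> {})"

definition injective_matching ::
  "'a set \<Rightarrow> ('a \<Rightarrow> 't set) \<Rightarrow> 'b set \<Rightarrow> ('b \<Rightarrow> 't set) \<Rightarrow> ('a \<times> 'b) set \<Rightarrow> bool" where
  "injective_matching RA A RB B M \<longleftrightarrow>
     barcode_matching RA A RB B M \<and> (\<forall>a\<in>RA. \<exists>b. (a, b) \<in> M)"

definition sub_barcode_matching ::
  "'a set \<Rightarrow> ('a \<Rightarrow> 't set) \<Rightarrow> 'b set \<Rightarrow> ('b \<Rightarrow> 't set) \<Rightarrow> ('a \<times> 'b) set \<Rightarrow> bool" where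
  "sub_barcode_matching RA A RB B M \<longleftrightarrow>
     barcode_matching RA A RB B M \<and> (\<forall>(a, b)\<in>M. A a \<subseteq> B b)"

text \<open>Composition N \<circ> M of barcode matchings M : A \<nrightarrow> B and N : B \<nrightarrow> C.\<close>
definition comp_match ::
  "('a \<Rightarrow> 't set) \<Rightarrow> ('c \<Rightarrow> 't set) \<Rightarrow> ('a \<times> 'b) set \<Rightarrow> ('b \<times> 'c) set \<Rightarrow> ('a \<times> 'c) set" where
  "comp_match A C M N = {(a, c). \<exists>b. (a, b) \<in> M \<and> (b, c) \<in> N \<and> A a \<inter> C c \<noteq> {}}"

text \<open>Upper end of an interval (its down-closure) and lower end (its up-closure);
  these distinguish e.g. [0,1] from [0,1).\<close>
definition upper_end :: "'t::linorder set \<Rightarrow> 't set" where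
  "upper_end I = {t. \<exists>s\<in>I. t \<le> s}"

definition lower_end :: "'t::linorder set \<Rightarrow> 't set" where
  "lower_end I = {t. \<exists>s\<in>I. s \<le> t}"

definition decreasing_enum :: "('r \<Rightarrow> 't set) \<Rightarrow> 'r set \<Rightarrow> ('r \<Rightarrow> nat) \<Rightarrow> bool" where
  "decreasing_enum I S r \<longleftrightarrow>
     inj_on r S \<and> (\<forall>\<beta>\<in>S. \<forall>m < r \<beta>. m \<in> r ` S) \<and>
     (\<forall>\<beta>\<in>S. \<forall>\<beta>'\<in>S. I \<beta>' \<subset> I \<beta> \<longrightarrow> r \<beta> < r \<beta>')"

definition grouped_matching ::
  "('t set \<Rightarrow> 't set) \<Rightarrow> 'a set \<Rightarrow> ('a \<Rightarrow> 't set) \<Rightarrow> 'b set \<Rightarrow> ('b \<Rightarrow> 't set) \<Rightarrow> ('a \<times> 'b) set \<Rightarrow> bool"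
where
  "grouped_matching endp RA A RB B M \<longleftrightarrow>
     (\<exists>rA rB.
        (\<forall>E. decreasing_enum A {a\<in>RA. endp (A a) = E} rA \<and>
             decreasing_enum B {b\<in>RB. endp (B b) = E} rB) \<and>
        M = {(a, b). a \<in> RA \<and> b \<in> RB \<and> endp (A a) = endp (B b) \<and> rA a = rB b})"

text \<open>Induced matching J(m) of a monomorphism (group by upper end) and Q(e) of an
  epimorphism (group by lower end), as combinatorial rules on the barcodes.\<close>
definition mono_induced_matching ::
  "'a set \<Rightarrow> ('a \<Rightarrow> 't::linorder set) \<Rightarrow> 'b set \<Rightarrow> ('b \<Rightarrow> 't set) \<Rightarrow> ('a \<times> 'b) set \<Rightarrow> bool" where
  "mono_induced_matching = grouped_matching upper_end"

definition epi_induced_matching ::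
  "'a set \<Rightarrow> ('a \<Rightarrow> 't::linorder set) \<Rightarrow> 'b set \<Rightarrow> ('b \<Rightarrow> 't set) \<Rightarrow> ('a \<times> 'b) set \<Rightarrow> bool" where
  "epi_induced_matching = grouped_matching lower_end"

end

theory Submission
  imports Defs
begin


definition lin_on :: "('k::field \<Rightarrow> 'a::ab_group_add \<Rightarrow> 'a) \<Rightarrow> ('k \<Rightarrow> 'b::ab_group_add \<Rightarrow> 'b) \<Rightarrow> 'a set \<Rightarrow> ('a \<Rightarrow> 'b) \<Rightarrow> bool" where
  "lin_on s1 s2 S g \<longleftrightarrow> (\<forall>x\<in>S. \<forall>y\<in>S. g (x + y) = g x + g y) \<and> (\<forall>c. \<forall>x\<in>S. g (s1 c x) = s2 c (g x))"

lemma lin_on_zero: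
  assumes v: "vector_space s1" and "module.subspace s1 S" "lin_on s1 s2 S g"
  shows "g 0 = 0"
proof -
  interpret v1: vector_space s1 by (rule v)
  have "0 \<in> S" using assms(2) by (rule v1.subspace_0)
  then have "g (0 + 0) = g 0 + g 0" using assms(3) unfolding lin_on_def by blast
  then show ?thesis by simp
qed

lemma lin_on_span:
  assumes v1: "vector_space s1" and v2: "vector_space s2" and S: "module.subspace s1 S"
    and g: "lin_on s1 s2 S g" and B: "Bs \<subseteq> S" and x: "x \<in> module.span s1 Bs"
  shows "g x \<in> module.span s2 (g ` Bs) \<and> x \<in> S"
proof -
  interpret v1: vector_space s1 by (rule v1)
  interpret v2: vector_space s2 by (rule v2)
  from x show ?thesis
  proof (induction rule: v1.span_induct_alt)
    case base
    then show ?case using lin_on_zero[OF v1 S g] v1.subspace_0[OF S] v2.span_zero by simp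
  next
    case (step c x y)
    have xS: "x \<in> S" using step B by auto
    have cx: "s1 c x \<in> S" using v1.subspace_scale[OF S xS] .
    have "g (s1 c x + y) = s2 c (g x) + g y"
      using g cx xS step by (simp add: lin_on_def)
    moreover have "s2 c (g x) + g y \<in> v2.span (g ` Bs)"
      using step by (intro v2.span_add v2.span_scale) (auto intro: v2.span_base)
    ultimately show ?case using v1.subspace_add[OF S cx] step by simp
  qed
qed

lemma lin_on_sum:
  assumes v1: "vector_space s1" and S: "module.subspace s1 S"
    and g: "lin_on s1 s2 S g" and I: "finite I" and v: "\<forall>i\<in>I. v i \<in> S"
  shows "g (\<Sum>i\<in>I. s1 (c i) (v i)) = (\<Sum>i\<in>I. s2 (c i) (g (v i)))"
  using I v
proof (induction I rule: finite_induct)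
  case empty
  then show ?case using lin_on_zero[OF v1 S g] by simp
next
  case (insert a I)
  interpret v1: vector_space s1 by (rule v1)
  have a: "s1 (c a) (v a) \<in> S" using insert v1.subspace_scale[OF S] by auto
  have s: "(\<Sum>i\<in>I. s1 (c i) (v i)) \<in> S"
    using insert by (intro v1.subspace_sum[OF S] v1.subspace_scale[OF S]) auto
  show ?case using insert a s g by (simp add: lin_on_def)
qed

lemma lin_on_inj_span:
  assumes v1: "vector_space s1" and v2: "vector_space s2" and S: "module.subspace s1 S"
    and g: "lin_on s1 s2 S g" and fin: "finite Bs" and B: "Bs \<subseteq> S"
    and ind: "\<not> module.dependent s2 (g ` Bs)" and inj: "inj_on g Bs"
    and x: "x \<in> module.span s1 Bs" and gx: "g x = 0"
  shows "x = 0"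
proof -
  interpret v1: vector_space s1 by (rule v1)
  interpret v2: vector_space s2 by (rule v2)
  obtain u where xu: "x = (\<Sum>v\<in>Bs. s1 (u v) v)"
    using x v1.span_finite[OF fin] by auto
  have "g x = (\<Sum>v\<in>Bs. s2 (u v) (g v))"
    unfolding xu by (rule lin_on_sum[OF v1 S g fin]) (use B in auto)
  also have "\<dots> = (\<Sum>w\<in>g ` Bs. s2 (u (the_inv_into Bs g w)) w)"
    using inj by (simp add: sum.reindex the_inv_into_f_f)
  finally have z: "(\<Sum>w\<in>g ` Bs. s2 (u (the_inv_into Bs g w)) w) = 0" using gx by simp
  have "\<forall>v\<in>Bs. u v = 0"
  proof
    fix v assume vB: "v \<in> Bs"
    have "u (the_inv_into Bs g (g v)) = 0"
      using v2.independentD[OF ind _ _ z] fin vB by auto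
    then show "u v = 0" using inj vB by (simp add: the_inv_into_f_f)
  qed
  then show ?thesis unfolding xu by simp
qed

definition bc_e ::
  "('k::field \<Rightarrow> 'v::ab_group_add \<Rightarrow> 'v) \<Rightarrow> ('t::linorder \<Rightarrow> 'v set) \<Rightarrow> ('t \<Rightarrow> 't \<Rightarrow> 'v \<Rightarrow> 'v) \<Rightarrow>
   'r set \<Rightarrow> ('r \<Rightarrow> 't set) \<Rightarrow> ('r \<Rightarrow> 't \<Rightarrow> 'v) \<Rightarrow> bool"
where
  "bc_e sc V f R I e \<longleftrightarrow>
        (\<forall>\<beta>\<in>R. \<forall>t\<in>I \<beta>. e \<beta> t \<in> V t) \<and>
        (\<forall>\<beta>\<in>R. \<forall>s t. s \<le> t \<longrightarrow> s \<in> I \<beta> \<longrightarrow>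
            f s t (e \<beta> s) = (if t \<in> I \<beta> then e \<beta> t else 0)) \<and>
        (\<forall>t. inj_on (\<lambda>\<beta>. e \<beta> t) {\<beta>\<in>R. t \<in> I \<beta>} \<and>
             \<not> module.dependent sc ((\<lambda>\<beta>. e \<beta> t) ` {\<beta>\<in>R. t \<in> I \<beta>}) \<and>
             module.span sc ((\<lambda>\<beta>. e \<beta> t) ` {\<beta>\<in>R. t \<in> I \<beta>}) = V t)"

lemma bc_eD:
  assumes "bc_e sc V f R I e"
  shows "\<And>\<beta> \<tau>. \<beta> \<in> R \<Longrightarrow> \<tau> \<in> I \<beta> \<Longrightarrow> e \<beta> \<tau> \<in> V \<tau>"
    and "\<And>\<beta> a b. \<beta> \<in> R \<Longrightarrow> a \<le> b \<Longrightarrow> a \<in> I \<beta> \<Longrightarrow> f a b (e \<beta> a) = (if b \<in> I \<beta> then e \<beta> b else 0)"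
    and "\<And>\<tau>. inj_on (\<lambda>\<beta>. e \<beta> \<tau>) {\<beta>\<in>R. \<tau> \<in> I \<beta>}"
    and "\<And>\<tau>. \<not> module.dependent sc ((\<lambda>\<beta>. e \<beta> \<tau>) ` {\<beta>\<in>R. \<tau> \<in> I \<beta>})"
    and "\<And>\<tau>. module.span sc ((\<lambda>\<beta>. e \<beta> \<tau>) ` {\<beta>\<in>R. \<tau> \<in> I \<beta>}) = V \<tau>"
  using assms unfolding bc_e_def by simp_all

lemma is_barcode_iff:
  "is_barcode sc V f R I \<longleftrightarrow> (\<forall>\<beta>\<in>R. interval (I \<beta>)) \<and> (\<exists>e. bc_e sc V f R I e)"
  unfolding is_barcode_def bc_e_def by blast

lemma ue_dc: "x \<in> upper_end I \<Longrightarrow> y \<le> x \<Longrightarrow> y \<in> upper_end I"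
  unfolding upper_end_def by (auto intro: order_trans)

lemma le_uc: "x \<in> lower_end I \<Longrightarrow> x \<le> y \<Longrightarrow> y \<in> lower_end I"
  unfolding lower_end_def by (auto intro: order_trans)

lemma sub_ue: "I \<subseteq> upper_end I"
  unfolding upper_end_def by auto

lemma sub_le: "I \<subseteq> lower_end I"
  unfolding lower_end_def by auto

lemma ue_in: "interval I \<Longrightarrow> t \<in> I \<Longrightarrow> t \<le> s \<Longrightarrow> s \<in> upper_end I \<Longrightarrow> s \<in> I"
  unfolding upper_end_def interval_def by blast

lemma le_in: "interval I \<Longrightarrow> t \<in> I \<Longrightarrow> s \<le> t \<Longrightarrow> s \<in> lower_end I \<Longrightarrow> s \<in> I"
  unfolding lower_end_def interval_def by blast

lemma ue_nested:
  fixes I J :: "'t::linorder set"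
  shows "upper_end I \<subseteq> upper_end J \<or> upper_end J \<subseteq> upper_end I"
proof (rule ccontr)
  assume "\<not> ?thesis"
  then obtain x y where x: "x \<in> upper_end I" "x \<notin> upper_end J" and y: "y \<in> upper_end J" "y \<notin> upper_end I"
    by blast
  show False
  proof (cases "x \<le> y")
    case True then show False using ue_dc[OF y(1) True] x by simp
  next
    case False then have "y \<le> x" by simp
    then show False using ue_dc[OF x(1)] y by simp
  qed
qed

lemma le_nested:
  fixes I J :: "'t::linorder set"
  shows "lower_end I \<subseteq> lower_end J \<or> lower_end J \<subseteq> lower_end I"
proof (rule ccontr)
  assume "\<not> ?thesis"
  then obtain x y where x: "x \<in> lower_end I" "x \<notin> lower_end J" and y: "y \<in> lower_end J" "y \<notin> lower_end I"
    by blast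
  show False
  proof (cases "x \<le> y")
    case True then show False using le_uc[OF x(1) True] y by simp
  next
    case False then have "y \<le> x" by simp
    then show False using le_uc[OF y(1)] x by simp
  qed
qed

lemma same_ue_nested:
  fixes I J :: "'t::linorder set"
  assumes "interval I" "interval J" "upper_end I = upper_end J"
  shows "I \<subseteq> J \<or> J \<subseteq> I"
proof (rule ccontr)
  assume "\<not> ?thesis"
  then obtain x y where x: "x \<in> I" "x \<notin> J" and y: "y \<in> J" "y \<notin> I" by blast
  show False
  proof (cases "x \<le> y")
    case True
    have "y \<in> upper_end J" using y(1) sub_ue by fast
    then have "y \<in> upper_end I" using assms(3) by simp
    then show False using ue_in[OF assms(1) x(1) True] y by simp
  next
    case False then have "y \<le> x" by simp
    have "x \<in> upper_end I" using x(1) sub_ue by fast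
    then have "x \<in> upper_end J" using assms(3) by simp
    then show False using ue_in[OF assms(2) y(1) \<open>y \<le> x\<close>] x by simp
  qed
qed

lemma same_le_nested:
  fixes I J :: "'t::linorder set"
  assumes "interval I" "interval J" "lower_end I = lower_end J"
  shows "I \<subseteq> J \<or> J \<subseteq> I"
proof (rule ccontr)
  assume "\<not> ?thesis"
  then obtain x y where x: "x \<in> I" "x \<notin> J" and y: "y \<in> J" "y \<notin> I" by blast
  show False
  proof (cases "x \<le> y")
    case True
    have "x \<in> lower_end I" using x(1) sub_le by fast
    then have "x \<in> lower_end J" using assms(3) by simp
    then show False using le_in[OF assms(2) y(1) True] x by simp
  next
    case False then have "y \<le> x" by simp
    have "y \<in> lower_end J" using y(1) sub_le by fast
    then have "y \<in> lower_end I" using assms(3) by simp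
    then show False using le_in[OF assms(1) x(1) \<open>y \<le> x\<close>] y by simp
  qed
qed

lemma bars_finite:
  assumes vs: "vector_space sc" and pf: "pfd sc V" and XV: "X t \<subseteq> V t"
    and e: "bc_e sc X f R I e"
  shows "finite {\<beta>\<in>R. t \<in> I \<beta>}"
proof -
  interpret vector_space sc by (rule vs)
  have "\<exists>Bs. finite Bs \<and> Bs \<subseteq> V t \<and> span Bs = V t" using pf unfolding pfd_def by simp
  then obtain Bs where Bs: "finite Bs" "Bs \<subseteq> V t" "span Bs = V t" by blast
  have ind: "independent ((\<lambda>\<beta>. e \<beta> t) ` {\<beta>\<in>R. t \<in> I \<beta>})"
    and inj: "inj_on (\<lambda>\<beta>. e \<beta> t) {\<beta>\<in>R. t \<in> I \<beta>}"
    and sp: "span ((\<lambda>\<beta>. e \<beta> t) ` {\<beta>\<in>R. t \<in> I \<beta>}) = X t"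
    using bc_eD[OF e] by simp_all
  have "(\<lambda>\<beta>. e \<beta> t) ` {\<beta>\<in>R. t \<in> I \<beta>} \<subseteq> span Bs"
  proof -
    have "(\<lambda>\<beta>. e \<beta> t) ` {\<beta>\<in>R. t \<in> I \<beta>} \<subseteq> X t" using sp span_superset by metis
    then show ?thesis using XV Bs(3) by simp
  qed
  then have "finite ((\<lambda>\<beta>. e \<beta> t) ` {\<beta>\<in>R. t \<in> I \<beta>})"
    using independent_span_bound[OF Bs(1) ind] by simp
  then show ?thesis using inj finite_image_iff by blast
qed

lemma pm_facts:
  fixes sc :: "'k::field \<Rightarrow> 'v::ab_group_add \<Rightarrow> 'v" and V :: "'t::linorder \<Rightarrow> 'v set"
  assumes "pers_module sc V f"
  shows "vector_space sc" "\<And>t. module.subspace sc (V t)"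
    "\<And>s u. s \<le> u \<Longrightarrow> lin_on sc sc (V s) (f s u)"
    "\<And>s u x. s \<le> u \<Longrightarrow> x \<in> V s \<Longrightarrow> f s u x \<in> V u"
proof -
  note d = assms[unfolded pers_module_def]
  show "vector_space sc" using d by (rule conjunct1)
  show "\<And>t. module.subspace sc (V t)" using d[THEN conjunct2, THEN conjunct1] by blast
  note m = d[THEN conjunct2, THEN conjunct2, THEN conjunct1]
  show "\<And>s u. s \<le> u \<Longrightarrow> lin_on sc sc (V s) (f s u)"
  proof -
    fix s u :: 't assume "s \<le> u"
    then have "(\<forall>x\<in>V s. \<forall>y\<in>V s. f s u (x + y) = f s u x + f s u y) \<and>
        (\<forall>c. \<forall>x\<in>V s. f s u (sc c x) = sc c (f s u x))" using m by blast
    then show "lin_on sc sc (V s) (f s u)" unfolding lin_on_def .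
  qed
  show "\<And>s u x. s \<le> u \<Longrightarrow> x \<in> V s \<Longrightarrow> f s u x \<in> V u" using m by blast
qed

lemma mono_count:
  fixes sc :: "'k::field \<Rightarrow> 'v::ab_group_add \<Rightarrow> 'v" and f :: "'t::linorder \<Rightarrow> 't \<Rightarrow> 'v \<Rightarrow> 'v"
  assumes pm: "pers_module sc V f" and pf: "pfd sc V"
    and XY: "\<And>t. X t \<subseteq> Y t" and YV: "\<And>t. Y t \<subseteq> V t"
    and iA: "\<forall>\<alpha>\<in>RA. interval (A \<alpha>)" and eA: "bc_e sc X f RA A eA"
    and iB: "\<forall>\<beta>\<in>RB. interval (B \<beta>)" and eB: "bc_e sc Y f RB B eB"
  shows "card {\<alpha>\<in>RA. upper_end (A \<alpha>) = E \<and> t \<in> A \<alpha>} \<le> card {\<beta>\<in>RB. upper_end (B \<beta>) = E \<and> t \<in> B \<beta>}"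
proof -
  note vs = pm_facts(1)[OF pm]
  note sub = pm_facts(2)[OF pm]
  note lin = pm_facts(3)[OF pm]
  interpret vector_space sc by (rule vs)
  have eBY: "\<And>\<beta> \<tau>. \<beta> \<in> RB \<Longrightarrow> \<tau> \<in> B \<beta> \<Longrightarrow> eB \<beta> \<tau> \<in> Y \<tau>"
    and mapB: "\<And>\<beta> a b. \<beta> \<in> RB \<Longrightarrow> a \<le> b \<Longrightarrow> a \<in> B \<beta> \<Longrightarrow> f a b (eB \<beta> a) = (if b \<in> B \<beta> then eB \<beta> b else 0)"
    and injB: "\<And>\<tau>. inj_on (\<lambda>\<beta>. eB \<beta> \<tau>) {\<beta>\<in>RB. \<tau> \<in> B \<beta>}"
    and indB: "\<And>\<tau>. independent ((\<lambda>\<beta>. eB \<beta> \<tau>) ` {\<beta>\<in>RB. \<tau> \<in> B \<beta>})"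
    and spB: "\<And>\<tau>. span ((\<lambda>\<beta>. eB \<beta> \<tau>) ` {\<beta>\<in>RB. \<tau> \<in> B \<beta>}) = Y \<tau>"
    using bc_eD[OF eB] by simp_all
  have eAX: "\<And>\<alpha> \<tau>. \<alpha> \<in> RA \<Longrightarrow> \<tau> \<in> A \<alpha> \<Longrightarrow> eA \<alpha> \<tau> \<in> X \<tau>"
    and mapA: "\<And>\<alpha> a b. \<alpha> \<in> RA \<Longrightarrow> a \<le> b \<Longrightarrow> a \<in> A \<alpha> \<Longrightarrow> f a b (eA \<alpha> a) = (if b \<in> A \<alpha> then eA \<alpha> b else 0)"
    and injA: "\<And>\<tau>. inj_on (\<lambda>\<alpha>. eA \<alpha> \<tau>) {\<alpha>\<in>RA. \<tau> \<in> A \<alpha>}"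
    and indA: "\<And>\<tau>. independent ((\<lambda>\<alpha>. eA \<alpha> \<tau>) ` {\<alpha>\<in>RA. \<tau> \<in> A \<alpha>})"
    using bc_eD[OF eA] by simp_all
  define AE where "AE = {\<alpha>\<in>RA. upper_end (A \<alpha>) = E \<and> t \<in> A \<alpha>}"
  define BT where "BT = {\<beta>\<in>RB. t \<in> B \<beta>}"
  define mid where "mid = {\<beta>\<in>BT. upper_end (B \<beta>) = E}"
  define small where "small = {\<beta>\<in>BT. \<not> E \<subseteq> upper_end (B \<beta>)}"
  define big where "big = {\<beta>\<in>BT. E \<subseteq> upper_end (B \<beta>) \<and> upper_end (B \<beta>) \<noteq> E}"
  have midE: "{\<beta>\<in>RB. upper_end (B \<beta>) = E \<and> t \<in> B \<beta>} = mid" by (auto simp: mid_def BT_def)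
  have finBT: "finite BT" unfolding BT_def by (rule bars_finite[OF vs pf YV eB])
  have BTsplit: "BT = small \<union> (mid \<union> big)" by (auto simp: small_def mid_def big_def)
  have fin_small: "finite small" "finite mid" "finite big"
    using finBT by (auto simp: small_def mid_def big_def)
  show ?thesis
  proof (cases "AE = {}")
    case True
    then have "{\<alpha>\<in>RA. upper_end (A \<alpha>) = E \<and> t \<in> A \<alpha>} = {}" unfolding AE_def .
    then have "card {\<alpha>\<in>RA. upper_end (A \<alpha>) = E \<and> t \<in> A \<alpha>} = 0" by (metis card.empty)
    then show ?thesis by linarith
  next
    case False
    then obtain \<alpha>0 where \<alpha>0: "\<alpha>0 \<in> AE" by auto
    have tE: "t \<in> E" using \<alpha>0 sub_ue by (auto simp: AE_def)
    have Edc: "\<And>x y. x \<in> E \<Longrightarrow> y \<le> x \<Longrightarrow> y \<in> E" using \<alpha>0 ue_dc by (auto simp: AE_def)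
    have "\<forall>\<beta>\<in>small. \<exists>p. p \<in> E \<and> p \<notin> upper_end (B \<beta>)" unfolding small_def by blast
    then obtain p where p: "\<forall>\<beta>\<in>small. p \<beta> \<in> E \<and> p \<beta> \<notin> upper_end (B \<beta>)" by metis
    define s where "s = Max (insert t (p ` small))"
    have fins: "finite (insert t (p ` small))" using fin_small by simp
    have "s \<in> insert t (p ` small)" unfolding s_def by (rule Max_in[OF fins]) simp
    then have sE: "s \<in> E" using p tE by blast
    have ts: "t \<le> s" unfolding s_def using fins by simp
    have s_small: "\<forall>\<beta>\<in>small. s \<notin> B \<beta>"
    proof (intro ballI notI)
      fix \<beta> assume b: "\<beta> \<in> small" and sb: "s \<in> B \<beta>"
      have "p \<beta> \<le> s" unfolding s_def using fins b by simp
      moreover have "s \<in> upper_end (B \<beta>)" using sb sub_ue by fast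
      ultimately have "p \<beta> \<in> upper_end (B \<beta>)" using ue_dc by blast
      then show False using p b by blast
    qed
    have s_mb: "\<forall>\<beta>\<in>mid \<union> big. s \<in> B \<beta>"
    proof
      fix \<beta> assume b: "\<beta> \<in> mid \<union> big"
      then have "\<beta> \<in> RB" "t \<in> B \<beta>" "E \<subseteq> upper_end (B \<beta>)" by (auto simp: mid_def big_def BT_def)
      then show "s \<in> B \<beta>" using ue_in[OF _ _ ts, of "B \<beta>"] iB sE by blast
    qed
    have s_A: "\<forall>\<alpha>\<in>AE. s \<in> A \<alpha>"
    proof
      fix \<alpha> assume a: "\<alpha> \<in> AE"
      then have "\<alpha> \<in> RA" "t \<in> A \<alpha>" "E \<subseteq> upper_end (A \<alpha>)" by (auto simp: AE_def)
      then show "s \<in> A \<alpha>" using ue_in[OF _ _ ts, of "A \<alpha>"] iA sE by blast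
    qed
    have RAs: "AE \<subseteq> {\<alpha>\<in>RA. s \<in> A \<alpha>}" using s_A by (auto simp: AE_def)
    have mbs: "mid \<union> big \<subseteq> {\<beta>\<in>RB. s \<in> B \<beta>}" using s_mb by (auto simp: mid_def big_def BT_def)
    have mbV: "(\<lambda>\<beta>. eB \<beta> s) ` (mid \<union> big) \<subseteq> V s" using mbs eBY YV by blast
    have claim1: "\<forall>\<alpha>\<in>AE. eA \<alpha> s \<in> span ((\<lambda>\<beta>. eB \<beta> s) ` (mid \<union> big))"
    proof
      fix \<alpha> assume a: "\<alpha> \<in> AE"
      then have aR: "\<alpha> \<in> RA" and at: "t \<in> A \<alpha>" by (auto simp: AE_def)
      have e1: "eA \<alpha> s = f t s (eA \<alpha> t)" using mapA[OF aR ts at] s_A a by simp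
      have "eA \<alpha> t \<in> span ((\<lambda>\<beta>. eB \<beta> t) ` BT)" using eAX[OF aR at] XY spB unfolding BT_def by blast
      moreover have "(\<lambda>\<beta>. eB \<beta> t) ` BT \<subseteq> V t" using eBY YV unfolding BT_def by blast
      ultimately have "f t s (eA \<alpha> t) \<in> span (f t s ` (\<lambda>\<beta>. eB \<beta> t) ` BT)"
        using lin_on_span[OF vs vs sub lin[OF ts]] by blast
      moreover have "f t s ` (\<lambda>\<beta>. eB \<beta> t) ` BT \<subseteq> insert 0 ((\<lambda>\<beta>. eB \<beta> s) ` (mid \<union> big))"
      proof
        fix y assume "y \<in> f t s ` (\<lambda>\<beta>. eB \<beta> t) ` BT"
        then obtain \<beta> where b: "\<beta> \<in> BT" and y: "y = f t s (eB \<beta> t)" by auto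
        have y2: "y = (if s \<in> B \<beta> then eB \<beta> s else 0)" using y mapB[OF _ ts] b by (auto simp: BT_def)
        show "y \<in> insert 0 ((\<lambda>\<beta>. eB \<beta> s) ` (mid \<union> big))"
        proof (cases "s \<in> B \<beta>")
          case True
          then have "\<beta> \<in> mid \<union> big" using b BTsplit s_small by blast
          then show ?thesis using y2 True by auto
        qed (use y2 in auto)
      qed
      ultimately have "f t s (eA \<alpha> t) \<in> span (insert 0 ((\<lambda>\<beta>. eB \<beta> s) ` (mid \<union> big)))"
        using span_mono by blast
      then show "eA \<alpha> s \<in> span ((\<lambda>\<beta>. eB \<beta> s) ` (mid \<union> big))" using e1 by simp
    qed
    have claim2: "\<forall>\<alpha>\<in>AE. eA \<alpha> s \<in> span ((\<lambda>\<beta>. eB \<beta> s) ` mid)"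
    proof (cases "big = {}")
      case True
      then show ?thesis using claim1 by simp
    next
      case False
      have "\<forall>\<beta>\<in>big. \<exists>q. q \<in> upper_end (B \<beta>) \<and> q \<notin> E" unfolding big_def by blast
      then obtain q where q: "\<forall>\<beta>\<in>big. q \<beta> \<in> upper_end (B \<beta>) \<and> q \<beta> \<notin> E" by metis
      define u where "u = Min (q ` big)"
      have finq: "finite (q ` big)" "q ` big \<noteq> {}" using fin_small False by auto
      have "u \<in> q ` big" unfolding u_def by (rule Min_in[OF finq])
      then have uE: "u \<notin> E" using q by blast
      have su: "s \<le> u"
      proof (rule ccontr)
        assume "\<not> s \<le> u" then have "u \<le> s" by simp
        then show False using Edc[OF sE] uE by blast
      qed
      have u_big: "\<forall>\<beta>\<in>big. u \<in> B \<beta>"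
      proof
        fix \<beta> assume b: "\<beta> \<in> big"
        have "u \<le> q \<beta>" unfolding u_def using finq b by simp
        then have "u \<in> upper_end (B \<beta>)" using ue_dc q b by blast
        moreover have "\<beta> \<in> RB" using b by (auto simp: big_def BT_def)
        ultimately show "u \<in> B \<beta>" using ue_in iB s_mb b su by blast
      qed
      have u_mid: "\<forall>\<beta>\<in>mid. u \<notin> B \<beta>" using uE sub_ue by (auto simp: mid_def)
      have u_A: "\<forall>\<alpha>\<in>AE. u \<notin> A \<alpha>" using uE sub_ue by (auto simp: AE_def)
      show ?thesis
      proof
        fix \<alpha> assume a: "\<alpha> \<in> AE"
        then have aR: "\<alpha> \<in> RA" by (auto simp: AE_def)
        obtain m b where mb: "eA \<alpha> s = m + b" and m: "m \<in> span ((\<lambda>\<beta>. eB \<beta> s) ` mid)"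
          and b: "b \<in> span ((\<lambda>\<beta>. eB \<beta> s) ` big)"
        proof -
          have "eA \<alpha> s \<in> span ((\<lambda>\<beta>. eB \<beta> s) ` mid \<union> (\<lambda>\<beta>. eB \<beta> s) ` big)"
            using claim1 a by (simp add: image_Un)
          then show ?thesis using that unfolding span_Un by blast
        qed
        have midV: "(\<lambda>\<beta>. eB \<beta> s) ` mid \<subseteq> V s" and bigV: "(\<lambda>\<beta>. eB \<beta> s) ` big \<subseteq> V s"
          using mbV by auto
        note L = lin_on_span[OF vs vs sub lin[OF su]]
        have mV: "m \<in> V s" and fm: "f s u m \<in> span (f s u ` (\<lambda>\<beta>. eB \<beta> s) ` mid)"
          using L[OF midV m] by auto
        have bV: "b \<in> V s" using L[OF bigV b] by auto
        have "f s u ` (\<lambda>\<beta>. eB \<beta> s) ` mid \<subseteq> {0}"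
        proof
          fix y assume "y \<in> f s u ` (\<lambda>\<beta>. eB \<beta> s) ` mid"
          then obtain \<beta> where bm: "\<beta> \<in> mid" and y: "y = f s u (eB \<beta> s)" by auto
          have "\<beta> \<in> RB" using bm by (auto simp: mid_def BT_def)
          then show "y \<in> {0}" using y mapB[OF _ su] s_mb u_mid bm by auto
        qed
        then have "span (f s u ` (\<lambda>\<beta>. eB \<beta> s) ` mid) \<subseteq> {0}"
          using span_mono[of _ "{0}"] by simp
        then have fm0: "f s u m = 0" using fm by blast
        have "f s u (eA \<alpha> s) = 0" using mapA[OF aR su] s_A u_A a by simp
        moreover have "f s u (eA \<alpha> s) = f s u m + f s u b"
          using mb lin[OF su] mV bV by (simp add: lin_on_def)
        ultimately have fb0: "f s u b = 0" using fm0 by simp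
        have fsu: "\<And>\<beta>. \<beta> \<in> big \<Longrightarrow> f s u (eB \<beta> s) = eB \<beta> u"
          proof -
            fix \<beta> assume b: "\<beta> \<in> big"
            have "\<beta> \<in> RB" using b unfolding big_def BT_def by blast
            moreover have "s \<in> B \<beta>" using s_mb b by blast
            moreover have "u \<in> B \<beta>" using u_big b by blast
            ultimately show "f s u (eB \<beta> s) = eB \<beta> u" using mapB[OF _ su] by simp
          qed
        have img: "f s u ` (\<lambda>\<beta>. eB \<beta> s) ` big = (\<lambda>\<beta>. eB \<beta> u) ` big"
          unfolding image_image using fsu by (rule image_cong[OF refl])
        have bigu: "big \<subseteq> {\<beta>\<in>RB. u \<in> B \<beta>}" using u_big unfolding big_def BT_def by blast
        have ind: "independent (f s u ` (\<lambda>\<beta>. eB \<beta> s) ` big)"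
          unfolding img by (rule independent_mono[OF indB[of u]]) (rule image_mono[OF bigu])
        have inj: "inj_on (f s u) ((\<lambda>\<beta>. eB \<beta> s) ` big)"
        proof (rule inj_onI)
          fix x y assume x: "x \<in> (\<lambda>\<beta>. eB \<beta> s) ` big" and y: "y \<in> (\<lambda>\<beta>. eB \<beta> s) ` big"
            and xy: "f s u x = f s u y"
          obtain \<beta>1 where b1: "\<beta>1 \<in> big" "x = eB \<beta>1 s" using x by auto
          obtain \<beta>2 where b2: "\<beta>2 \<in> big" "y = eB \<beta>2 s" using y by auto
          have "f s u (eB \<beta>1 s) = eB \<beta>1 u" "f s u (eB \<beta>2 s) = eB \<beta>2 u"
            using fsu b1 b2 by simp_all
          then have "eB \<beta>1 u = eB \<beta>2 u" using xy b1 b2 by simp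
          then have "\<beta>1 = \<beta>2" using injB[of u] bigu b1 b2 unfolding inj_on_def by blast
          then show "x = y" using b1 b2 by simp
        qed
        have "b = 0"
          using lin_on_inj_span[OF vs vs sub lin[OF su] _ bigV ind inj b fb0] fin_small by simp
        then show "eA \<alpha> s \<in> span ((\<lambda>\<beta>. eB \<beta> s) ` mid)" using mb m by simp
      qed
    qed
    have indAE: "independent ((\<lambda>\<alpha>. eA \<alpha> s) ` AE)"
      by (rule independent_mono[OF indA[of s]]) (rule image_mono[OF RAs])
    have finm: "finite ((\<lambda>\<beta>. eB \<beta> s) ` mid)" using fin_small(2) by (rule finite_imageI)
    have subm: "(\<lambda>\<alpha>. eA \<alpha> s) ` AE \<subseteq> span ((\<lambda>\<beta>. eB \<beta> s) ` mid)"
      using claim2 by blast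
    have "card ((\<lambda>\<alpha>. eA \<alpha> s) ` AE) \<le> card ((\<lambda>\<beta>. eB \<beta> s) ` mid)"
      using independent_span_bound[OF finm indAE subm] by (rule conjunct2)
    also have "\<dots> \<le> card mid" by (rule card_image_le[OF fin_small(2)])
    finally have c1: "card ((\<lambda>\<alpha>. eA \<alpha> s) ` AE) \<le> card mid" .
    have "card ((\<lambda>\<alpha>. eA \<alpha> s) ` AE) = card AE"
      by (rule card_image[OF inj_on_subset[OF injA[of s] RAs]])
    with c1 have "card AE \<le> card mid" by linarith
    then show ?thesis unfolding AE_def midE .
  qed
qed

lemma epi_count:
  fixes scX :: "'k::field \<Rightarrow> 'v::ab_group_add \<Rightarrow> 'v" and scY :: "'k \<Rightarrow> 'w::ab_group_add \<Rightarrow> 'w"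
    and f :: "'t::linorder \<Rightarrow> 't \<Rightarrow> 'v \<Rightarrow> 'v" and g :: "'t \<Rightarrow> 't \<Rightarrow> 'w \<Rightarrow> 'w"
    and h :: "'t \<Rightarrow> 'v \<Rightarrow> 'w"
  assumes pmV: "pers_module scX V f" and pfV: "pfd scX V"
    and pmW: "pers_module scY W g" and pfW: "pfd scY W"
    and XV: "\<And>t. X t \<subseteq> V t" and Yh: "\<And>t. Y t = h t ` X t"
    and hlin: "\<And>t. lin_on scX scY (V t) (h t)" and hW: "\<And>t x. x \<in> V t \<Longrightarrow> h t x \<in> W t"
    and hcomm: "\<And>s t x. s \<le> t \<Longrightarrow> x \<in> V s \<Longrightarrow> h t (f s t x) = g s t (h s x)"
    and iA: "\<forall>\<alpha>\<in>RA. interval (A \<alpha>)" and eA: "bc_e scX X f RA A eA"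
    and iB: "\<forall>\<beta>\<in>RB. interval (B \<beta>)" and eB: "bc_e scY Y g RB B eB"
  shows "card {\<beta>\<in>RB. lower_end (B \<beta>) = L \<and> t \<in> B \<beta>} \<le> card {\<alpha>\<in>RA. lower_end (A \<alpha>) = L \<and> t \<in> A \<alpha>}"
proof -
  note vsX = pm_facts(1)[OF pmV]
  note subV = pm_facts(2)[OF pmV]
  note linf = pm_facts(3)[OF pmV]
  note vsY = pm_facts(1)[OF pmW]
  note subW = pm_facts(2)[OF pmW]
  note ling = pm_facts(3)[OF pmW]
  interpret vX: vector_space scX by (rule vsX)
  interpret vY: vector_space scY by (rule vsY)
  have YW: "\<And>t. Y t \<subseteq> W t" unfolding Yh using hW XV by blast
  have eBY: "\<And>\<beta> \<tau>. \<beta> \<in> RB \<Longrightarrow> \<tau> \<in> B \<beta> \<Longrightarrow> eB \<beta> \<tau> \<in> Y \<tau>"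
    and mapB: "\<And>\<beta> a b. \<beta> \<in> RB \<Longrightarrow> a \<le> b \<Longrightarrow> a \<in> B \<beta> \<Longrightarrow> g a b (eB \<beta> a) = (if b \<in> B \<beta> then eB \<beta> b else 0)"
    and injB: "\<And>\<tau>. inj_on (\<lambda>\<beta>. eB \<beta> \<tau>) {\<beta>\<in>RB. \<tau> \<in> B \<beta>}"
    and indB: "\<And>\<tau>. vY.independent ((\<lambda>\<beta>. eB \<beta> \<tau>) ` {\<beta>\<in>RB. \<tau> \<in> B \<beta>})"
    and spB: "\<And>\<tau>. vY.span ((\<lambda>\<beta>. eB \<beta> \<tau>) ` {\<beta>\<in>RB. \<tau> \<in> B \<beta>}) = Y \<tau>"
    using bc_eD[OF eB] by simp_all
  have eAX: "\<And>\<alpha> \<tau>. \<alpha> \<in> RA \<Longrightarrow> \<tau> \<in> A \<alpha> \<Longrightarrow> eA \<alpha> \<tau> \<in> X \<tau>"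
    and mapA: "\<And>\<alpha> a b. \<alpha> \<in> RA \<Longrightarrow> a \<le> b \<Longrightarrow> a \<in> A \<alpha> \<Longrightarrow> f a b (eA \<alpha> a) = (if b \<in> A \<alpha> then eA \<alpha> b else 0)"
    and spA: "\<And>\<tau>. vX.span ((\<lambda>\<alpha>. eA \<alpha> \<tau>) ` {\<alpha>\<in>RA. \<tau> \<in> A \<alpha>}) = X \<tau>"
    using bc_eD[OF eA] by simp_all
  define BL where "BL = {\<beta>\<in>RB. lower_end (B \<beta>) = L \<and> t \<in> B \<beta>}"
  define AT where "AT = {\<alpha>\<in>RA. t \<in> A \<alpha>}"
  define BT where "BT = {\<beta>\<in>RB. t \<in> B \<beta>}"
  define midX where "midX = {\<alpha>\<in>AT. lower_end (A \<alpha>) = L}"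
  define smallX where "smallX = {\<alpha>\<in>AT. \<not> L \<subseteq> lower_end (A \<alpha>)}"
  define bigX where "bigX = {\<alpha>\<in>AT. L \<subseteq> lower_end (A \<alpha>) \<and> lower_end (A \<alpha>) \<noteq> L}"
  define bigY where "bigY = {\<beta>\<in>BT. L \<subseteq> lower_end (B \<beta>) \<and> lower_end (B \<beta>) \<noteq> L}"
  have midXE: "{\<alpha>\<in>RA. lower_end (A \<alpha>) = L \<and> t \<in> A \<alpha>} = midX" by (auto simp: midX_def AT_def)
  have finAT: "finite AT" unfolding AT_def by (rule bars_finite[OF vsX pfV XV eA])
  have finBT: "finite BT" unfolding BT_def by (rule bars_finite[OF vsY pfW YW eB])
  have ATsplit: "AT = smallX \<union> (midX \<union> bigX)" by (auto simp: smallX_def midX_def bigX_def)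
  have BLBT: "BL \<subseteq> BT" by (auto simp: BL_def BT_def)
  have bigYBT: "bigY \<subseteq> BT" by (auto simp: bigY_def)
  have fins: "finite smallX" "finite midX" "finite bigX" "finite bigY" "finite BL"
    using finAT finBT BLBT bigYBT by (auto simp: smallX_def midX_def bigX_def intro: finite_subset)
  show ?thesis
  proof (cases "BL = {}")
    case True
    then have "card {\<beta>\<in>RB. lower_end (B \<beta>) = L \<and> t \<in> B \<beta>} = 0" unfolding BL_def by (metis card.empty)
    then show ?thesis by linarith
  next
    case False
    then obtain \<beta>0 where \<beta>0: "\<beta>0 \<in> BL" by auto
    have L0: "L = lower_end (B \<beta>0)" using \<beta>0 unfolding BL_def by simp
    have tL: "t \<in> L" using \<beta>0 sub_le unfolding BL_def by blast
    have Luc: "\<And>x y. x \<in> L \<Longrightarrow> x \<le> y \<Longrightarrow> y \<in> L" unfolding L0 by (rule le_uc)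
    have "\<forall>\<alpha>\<in>smallX. \<exists>p. p \<in> L \<and> p \<notin> lower_end (A \<alpha>)" unfolding smallX_def by blast
    then obtain p where p: "\<forall>\<alpha>\<in>smallX. p \<alpha> \<in> L \<and> p \<alpha> \<notin> lower_end (A \<alpha>)" by metis
    define s where "s = Min (insert t (p ` smallX))"
    have finsi: "finite (insert t (p ` smallX))" using fins by simp
    have "s \<in> insert t (p ` smallX)" unfolding s_def by (rule Min_in[OF finsi]) simp
    then have sL: "s \<in> L" using p tL by blast
    have st: "s \<le> t" unfolding s_def using finsi by simp
    have s_small: "\<forall>\<alpha>\<in>smallX. s \<notin> A \<alpha>"
    proof (intro ballI notI)
      fix \<alpha> assume a: "\<alpha> \<in> smallX" and sa: "s \<in> A \<alpha>"
      have "s \<le> p \<alpha>" unfolding s_def using finsi a by simp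
      moreover have "s \<in> lower_end (A \<alpha>)" using sa sub_le by fast
      ultimately have "p \<alpha> \<in> lower_end (A \<alpha>)" using le_uc by blast
      then show False using p a by blast
    qed
    have s_mb: "\<forall>\<alpha>\<in>midX \<union> bigX. s \<in> A \<alpha>"
    proof
      fix \<alpha> assume a: "\<alpha> \<in> midX \<union> bigX"
      then have "\<alpha> \<in> RA" "t \<in> A \<alpha>" "L \<subseteq> lower_end (A \<alpha>)" unfolding midX_def bigX_def AT_def by auto
      then show "s \<in> A \<alpha>" using le_in[OF _ _ st, of "A \<alpha>"] iA sL by blast
    qed
    have s_BL: "\<forall>\<beta>\<in>BL. s \<in> B \<beta>"
    proof
      fix \<beta> assume b: "\<beta> \<in> BL"
      then have "\<beta> \<in> RB" "t \<in> B \<beta>" "L = lower_end (B \<beta>)" unfolding BL_def by auto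
      then show "s \<in> B \<beta>" using le_in[OF _ _ st, of "B \<beta>"] iB sL by blast
    qed
    define P where "P = (\<lambda>\<alpha>. eA \<alpha> t) ` (midX \<union> bigX)"
    have PX: "P \<subseteq> X t"
    proof
      fix y assume "y \<in> P"
      then obtain \<alpha> where a: "\<alpha> \<in> midX \<union> bigX" "y = eA \<alpha> t" unfolding P_def by blast
      then have "\<alpha> \<in> RA" "t \<in> A \<alpha>" unfolding midX_def bigX_def AT_def by auto
      then show "y \<in> X t" using eAX a(2) by simp
    qed
    have PV: "P \<subseteq> V t" using PX XV by blast
    have claim1: "\<forall>\<beta>\<in>BL. eB \<beta> t \<in> vY.span (h t ` P)"
    proof
      fix \<beta> assume b: "\<beta> \<in> BL"
      then have bR: "\<beta> \<in> RB" and tB: "t \<in> B \<beta>" unfolding BL_def by auto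
      have sB: "s \<in> B \<beta>" using s_BL b by blast
      have e1: "eB \<beta> t = g s t (eB \<beta> s)" using mapB[OF bR st sB] tB by simp
      have "eB \<beta> s \<in> h s ` X s" using eBY[OF bR sB] Yh by simp
      then obtain x where x: "x \<in> X s" "eB \<beta> s = h s x" by blast
      have xV: "x \<in> V s" using x XV by blast
      have e2: "eB \<beta> t = h t (f s t x)" using e1 x(2) hcomm[OF st xV] by simp
      define AS where "AS = {\<alpha>\<in>RA. s \<in> A \<alpha>}"
      have xsp: "x \<in> vX.span ((\<lambda>\<alpha>. eA \<alpha> s) ` AS)" using x(1) spA unfolding AS_def by simp
      have ASV: "(\<lambda>\<alpha>. eA \<alpha> s) ` AS \<subseteq> V s"
      proof
        fix y assume "y \<in> (\<lambda>\<alpha>. eA \<alpha> s) ` AS"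
        then obtain \<alpha> where "\<alpha> \<in> AS" "y = eA \<alpha> s" by blast
        then show "y \<in> V s" using eAX XV unfolding AS_def by blast
      qed
      have fx: "f s t x \<in> vX.span (f s t ` (\<lambda>\<alpha>. eA \<alpha> s) ` AS)"
        using lin_on_span[OF vsX vsX subV linf[OF st] ASV xsp] by blast
      have "f s t ` (\<lambda>\<alpha>. eA \<alpha> s) ` AS \<subseteq> insert 0 P"
      proof
        fix y assume "y \<in> f s t ` (\<lambda>\<alpha>. eA \<alpha> s) ` AS"
        then obtain \<alpha> where a: "\<alpha> \<in> AS" and y: "y = f s t (eA \<alpha> s)" by blast
        have aR: "\<alpha> \<in> RA" and sA: "s \<in> A \<alpha>" using a unfolding AS_def by auto
        have y2: "y = (if t \<in> A \<alpha> then eA \<alpha> t else 0)" using y mapA[OF aR st sA] by simp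
        show "y \<in> insert 0 P"
        proof (cases "t \<in> A \<alpha>")
          case True
          then have "\<alpha> \<in> AT" using aR unfolding AT_def by blast
          moreover have "\<alpha> \<notin> smallX" using s_small sA by blast
          ultimately have "\<alpha> \<in> midX \<union> bigX" using ATsplit by blast
          then show ?thesis using y2 True unfolding P_def by simp
        next
          case False
          then show ?thesis using y2 by simp
        qed
      qed
      then have "vX.span (f s t ` (\<lambda>\<alpha>. eA \<alpha> s) ` AS) \<subseteq> vX.span (insert 0 P)"
        by (rule vX.span_mono)
      then have "vX.span (f s t ` (\<lambda>\<alpha>. eA \<alpha> s) ` AS) \<subseteq> vX.span P" by simp
      then have fxP: "f s t x \<in> vX.span P" using fx by blast
      have "h t (f s t x) \<in> vY.span (h t ` P)"
        using lin_on_span[OF vsX vsY subV hlin PV fxP] by blast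
      then show "eB \<beta> t \<in> vY.span (h t ` P)" using e2 by simp
    qed
    have claim2: "\<forall>\<alpha>\<in>bigX. h t (eA \<alpha> t) \<in> vY.span ((\<lambda>\<beta>. eB \<beta> t) ` bigY)"
    proof
      fix \<alpha> assume a: "\<alpha> \<in> bigX"
      then have aR: "\<alpha> \<in> RA" and tA: "t \<in> A \<alpha>" and Lsub: "L \<subseteq> lower_end (A \<alpha>)"
        and Lne: "lower_end (A \<alpha>) \<noteq> L" unfolding bigX_def AT_def by auto
      have "\<not> lower_end (A \<alpha>) \<subseteq> L" using Lsub Lne subset_antisym by metis
      then obtain q where qA': "q \<in> lower_end (A \<alpha>)" and qL: "q \<notin> L" by blast
      have qt: "q \<le> t"
      proof (rule ccontr)
        assume "\<not> q \<le> t" then have "t \<le> q" by simp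
        then show False using Luc[OF tL] qL by blast
      qed
      have qA: "q \<in> A \<alpha>" using le_in[OF _ tA qt qA'] iA aR by blast
      have e1: "eA \<alpha> t = f q t (eA \<alpha> q)" using mapA[OF aR qt qA] tA by simp
      have eq: "eA \<alpha> q \<in> V q" using eAX[OF aR qA] XV by blast
      have e2: "h t (eA \<alpha> t) = g q t (h q (eA \<alpha> q))" using e1 hcomm[OF qt eq] by simp
      define BQ where "BQ = {\<beta>\<in>RB. q \<in> B \<beta>}"
      have "h q (eA \<alpha> q) \<in> Y q" using eAX[OF aR qA] Yh by simp
      then have hsp: "h q (eA \<alpha> q) \<in> vY.span ((\<lambda>\<beta>. eB \<beta> q) ` BQ)" using spB unfolding BQ_def by simp
      have BQW: "(\<lambda>\<beta>. eB \<beta> q) ` BQ \<subseteq> W q"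
      proof
        fix y assume "y \<in> (\<lambda>\<beta>. eB \<beta> q) ` BQ"
        then obtain \<beta> where "\<beta> \<in> BQ" "y = eB \<beta> q" by blast
        then show "y \<in> W q" using eBY YW unfolding BQ_def by blast
      qed
      have gx: "g q t (h q (eA \<alpha> q)) \<in> vY.span (g q t ` (\<lambda>\<beta>. eB \<beta> q) ` BQ)"
        using lin_on_span[OF vsY vsY subW ling[OF qt] BQW hsp] by blast
      have "g q t ` (\<lambda>\<beta>. eB \<beta> q) ` BQ \<subseteq> insert 0 ((\<lambda>\<beta>. eB \<beta> t) ` bigY)"
      proof
        fix y assume "y \<in> g q t ` (\<lambda>\<beta>. eB \<beta> q) ` BQ"
        then obtain \<beta> where b: "\<beta> \<in> BQ" and y: "y = g q t (eB \<beta> q)" by blast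
        have bR: "\<beta> \<in> RB" and qB: "q \<in> B \<beta>" using b unfolding BQ_def by auto
        have y2: "y = (if t \<in> B \<beta> then eB \<beta> t else 0)" using y mapB[OF bR qt qB] by simp
        show "y \<in> insert 0 ((\<lambda>\<beta>. eB \<beta> t) ` bigY)"
        proof (cases "t \<in> B \<beta>")
          case True
          have ql: "q \<in> lower_end (B \<beta>)" using qB sub_le by fast
          then have n1: "\<not> lower_end (B \<beta>) \<subseteq> L" using qL by blast
          then have "L \<subseteq> lower_end (B \<beta>)" using le_nested[of "B \<beta>" "B \<beta>0"] unfolding L0 by blast
          then have "\<beta> \<in> bigY" using n1 True bR unfolding bigY_def BT_def by blast
          then show ?thesis using y2 True by simp
        next
          case False
          then show ?thesis using y2 by simp
        qed
      qed
      then have "vY.span (g q t ` (\<lambda>\<beta>. eB \<beta> q) ` BQ) \<subseteq> vY.span (insert 0 ((\<lambda>\<beta>. eB \<beta> t) ` bigY))"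
        by (rule vY.span_mono)
      then have "vY.span (g q t ` (\<lambda>\<beta>. eB \<beta> q) ` BQ) \<subseteq> vY.span ((\<lambda>\<beta>. eB \<beta> t) ` bigY)" by simp
      then show "h t (eA \<alpha> t) \<in> vY.span ((\<lambda>\<beta>. eB \<beta> t) ` bigY)" using gx e2 by auto
    qed
    define SP where "SP = h t ` (\<lambda>\<alpha>. eA \<alpha> t) ` midX \<union> (\<lambda>\<beta>. eB \<beta> t) ` bigY"
    have hP: "h t ` P \<subseteq> vY.span SP"
    proof
      fix y assume "y \<in> h t ` P"
      then obtain \<alpha> where a: "\<alpha> \<in> midX \<union> bigX" and y: "y = h t (eA \<alpha> t)" unfolding P_def by blast
      show "y \<in> vY.span SP"
      proof (cases "\<alpha> \<in> midX")
        case True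
        then have "y \<in> SP" using y unfolding SP_def by blast
        then show ?thesis by (rule vY.span_base)
      next
        case False
        then have "\<alpha> \<in> bigX" using a by blast
        then have "y \<in> vY.span ((\<lambda>\<beta>. eB \<beta> t) ` bigY)" using claim2 y by blast
        moreover have "vY.span ((\<lambda>\<beta>. eB \<beta> t) ` bigY) \<subseteq> vY.span SP"
          by (rule vY.span_mono) (unfold SP_def, blast)
        ultimately show ?thesis by blast
      qed
    qed
    have "vY.span (h t ` P) \<subseteq> vY.span SP"
      by (rule vY.span_minimal[OF hP vY.subspace_span])
    then have c3a: "\<forall>\<beta>\<in>BL. eB \<beta> t \<in> vY.span SP" using claim1 by blast
    have c3b: "\<forall>\<beta>\<in>bigY. eB \<beta> t \<in> vY.span SP"
    proof
      fix \<beta> assume "\<beta> \<in> bigY"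
      then have "eB \<beta> t \<in> SP" unfolding SP_def by blast
      then show "eB \<beta> t \<in> vY.span SP" by (rule vY.span_base)
    qed
    have c3: "(\<lambda>\<beta>. eB \<beta> t) ` (BL \<union> bigY) \<subseteq> vY.span SP"
    proof
      fix y assume "y \<in> (\<lambda>\<beta>. eB \<beta> t) ` (BL \<union> bigY)"
      then obtain \<beta> where "\<beta> \<in> BL \<union> bigY" "y = eB \<beta> t" by blast
      then show "y \<in> vY.span SP" using c3a c3b by blast
    qed
    have BLbig: "BL \<union> bigY \<subseteq> {\<beta>\<in>RB. t \<in> B \<beta>}" using BLBT bigYBT unfolding BT_def by blast
    have ind: "vY.independent ((\<lambda>\<beta>. eB \<beta> t) ` (BL \<union> bigY))"
      by (rule vY.independent_mono[OF indB[of t]]) (rule image_mono[OF BLbig])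
    have finSP: "finite SP" unfolding SP_def using fins by simp
    have "card ((\<lambda>\<beta>. eB \<beta> t) ` (BL \<union> bigY)) \<le> card SP"
      using vY.independent_span_bound[OF finSP ind c3] by (rule conjunct2)
    also have "\<dots> \<le> card (h t ` (\<lambda>\<alpha>. eA \<alpha> t) ` midX) + card ((\<lambda>\<beta>. eB \<beta> t) ` bigY)"
      unfolding SP_def by (rule card_Un_le)
    also have "\<dots> \<le> card midX + card bigY"
    proof -
      have "card (h t ` (\<lambda>\<alpha>. eA \<alpha> t) ` midX) \<le> card ((\<lambda>\<alpha>. eA \<alpha> t) ` midX)"
        by (rule card_image_le) (use fins in simp)
      also have "\<dots> \<le> card midX" by (rule card_image_le[OF fins(2)])
      finally have "card (h t ` (\<lambda>\<alpha>. eA \<alpha> t) ` midX) \<le> card midX" .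
      moreover have "card ((\<lambda>\<beta>. eB \<beta> t) ` bigY) \<le> card bigY" by (rule card_image_le[OF fins(4)])
      ultimately show ?thesis by linarith
    qed
    finally have c4: "card ((\<lambda>\<beta>. eB \<beta> t) ` (BL \<union> bigY)) \<le> card midX + card bigY" .
    have "card ((\<lambda>\<beta>. eB \<beta> t) ` (BL \<union> bigY)) = card (BL \<union> bigY)"
      by (rule card_image[OF inj_on_subset[OF injB[of t] BLbig]])
    also have "\<dots> = card BL + card bigY"
    proof (rule card_Un_disjoint[OF fins(5) fins(4)])
      show "BL \<inter> bigY = {}" by (auto simp: BL_def bigY_def)
    qed
    finally have "card BL \<le> card midX" using c4 by linarith
    then show ?thesis unfolding BL_def midXE .
  qed
qed



lemma grouped_conv:
  assumes "grouped_matching endp RA A RB B M"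
  shows "grouped_matching endp RB B RA A (converse M)"
proof -
  obtain rA rB where d: "\<forall>E. decreasing_enum A {a\<in>RA. endp (A a) = E} rA \<and>
             decreasing_enum B {b\<in>RB. endp (B b) = E} rB"
    and M: "M = {(a, b). a \<in> RA \<and> b \<in> RB \<and> endp (A a) = endp (B b) \<and> rA a = rB b}"
    using assms unfolding grouped_matching_def by blast
  have "converse M = {(b, a). b \<in> RB \<and> a \<in> RA \<and> endp (B b) = endp (A a) \<and> rB b = rA a}"
    unfolding M by auto
  then show ?thesis unfolding grouped_matching_def using d by blast
qed

lemma grouped_partner:
  fixes endp :: "'t set \<Rightarrow> 't set"
  assumes dA: "\<And>E. decreasing_enum A {a\<in>RA. endp (A a) = E} rA"
    and dB: "\<And>E. decreasing_enum B {b\<in>RB. endp (B b) = E} rB"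
    and nestB: "\<forall>b\<in>RB. \<forall>b'\<in>RB. endp (B b) = endp (B b') \<longrightarrow> B b \<subseteq> B b' \<or> B b' \<subseteq> B b"
    and nestA: "\<forall>a\<in>RA. \<forall>a'\<in>RA. endp (A a) = endp (A a') \<longrightarrow> A a \<subseteq> A a' \<or> A a' \<subseteq> A a"
    and finA: "\<And>t E. finite {a\<in>RA. endp (A a) = E \<and> t \<in> A a}"
    and finB: "\<And>t E. finite {b\<in>RB. endp (B b) = E \<and> t \<in> B b}"
    and cnt: "\<And>t E. card {a\<in>RA. endp (A a) = E \<and> t \<in> A a} \<le> card {b\<in>RB. endp (B b) = E \<and> t \<in> B b}"
    and a: "a \<in> RA" and ta: "t \<in> A a"
  shows "\<exists>b\<in>RB. endp (B b) = endp (A a) \<and> rB b = rA a \<and> t \<in> B b"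
proof -
  define E where "E = endp (A a)"
  define k where "k = rA a"
  define GA where "GA = {\<alpha>\<in>RA. endp (A \<alpha>) = E}"
  define GB where "GB = {\<beta>\<in>RB. endp (B \<beta>) = E}"
  define SA where "SA = {\<alpha>\<in>RA. endp (A \<alpha>) = E \<and> t \<in> A \<alpha>}"
  define SB where "SB = {\<beta>\<in>RB. endp (B \<beta>) = E \<and> t \<in> B \<beta>}"
  have injA: "inj_on rA GA" and segA: "\<And>\<alpha> m. \<alpha> \<in> GA \<Longrightarrow> m < rA \<alpha> \<Longrightarrow> m \<in> rA ` GA"
    and decA: "\<And>\<alpha> \<alpha>'. \<alpha> \<in> GA \<Longrightarrow> \<alpha>' \<in> GA \<Longrightarrow> A \<alpha>' \<subset> A \<alpha> \<Longrightarrow> rA \<alpha> < rA \<alpha>'"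
    using dA[of E] unfolding decreasing_enum_def GA_def by blast+
  have injB: "inj_on rB GB" and segB: "\<And>\<beta> m. \<beta> \<in> GB \<Longrightarrow> m < rB \<beta> \<Longrightarrow> m \<in> rB ` GB"
    and decB: "\<And>\<beta> \<beta>'. \<beta> \<in> GB \<Longrightarrow> \<beta>' \<in> GB \<Longrightarrow> B \<beta>' \<subset> B \<beta> \<Longrightarrow> rB \<beta> < rB \<beta>'"
    using dB[of E] unfolding decreasing_enum_def GB_def by blast+
  have aG: "a \<in> GA" unfolding GA_def E_def using a by simp
  define D where "D = {\<alpha>\<in>GA. rA \<alpha> \<le> k}"
  have DSA: "D \<subseteq> SA"
  proof
    fix \<alpha> assume al: "\<alpha> \<in> D"
    then have aR: "\<alpha> \<in> RA" and aE: "endp (A \<alpha>) = E" and ak: "rA \<alpha> \<le> k"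
      unfolding D_def GA_def by auto
    have "A a \<subseteq> A \<alpha>"
    proof (rule ccontr)
      assume n: "\<not> A a \<subseteq> A \<alpha>"
      then have "A \<alpha> \<subseteq> A a" using nestA[rule_format, OF a aR] aE unfolding E_def by blast
      then have "A \<alpha> \<subset> A a" using n by blast
      then have "rA a < rA \<alpha>" using decA[OF aG] al unfolding D_def by blast
      then show False using ak unfolding k_def by simp
    qed
    then show "\<alpha> \<in> SA" using ta aR aE unfolding SA_def by blast
  qed
  have rD: "rA ` D = {..k}"
  proof
    show "rA ` D \<subseteq> {..k}" unfolding D_def by auto
    show "{..k} \<subseteq> rA ` D"
    proof
      fix m assume "m \<in> {..k}"
      then have mk: "m \<le> k" by simp
      show "m \<in> rA ` D"
      proof (cases "m = k")
        case True
        then show ?thesis using aG unfolding D_def k_def by blast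
      next
        case False
        then have "m < rA a" using mk unfolding k_def by simp
        then obtain \<alpha> where "\<alpha> \<in> GA" "rA \<alpha> = m" using segA[OF aG] by blast
        then show ?thesis using mk unfolding D_def by blast
      qed
    qed
  qed
  have "card D = card (rA ` D)"
    using card_image[OF inj_on_subset[OF injA]] unfolding D_def by (metis (no_types, lifting) mem_Collect_eq subsetI)
  then have cD: "card D = Suc k" using rD by simp
  have finSA: "finite SA" unfolding SA_def by (rule finA)
  have finSB: "finite SB" unfolding SB_def by (rule finB)
  have "Suc k \<le> card SA" using card_mono[OF finSA DSA] cD by simp
  also have "card SA \<le> card SB" unfolding SA_def SB_def by (rule cnt)
  finally have kSB: "Suc k \<le> card SB" .
  have SBG: "SB \<subseteq> GB" unfolding SB_def GB_def by blast
  have cSB: "card (rB ` SB) = card SB" by (rule card_image[OF inj_on_subset[OF injB SBG]])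
  have "\<exists>\<beta>\<in>SB. k \<le> rB \<beta>"
  proof (rule ccontr)
    assume "\<not> ?thesis"
    then have "rB ` SB \<subseteq> {..<k}" by force
    then have "card (rB ` SB) \<le> k" using card_mono[of "{..<k}"] by fastforce
    then show False using cSB kSB by simp
  qed
  then obtain \<beta> where b: "\<beta> \<in> SB" and kb: "k \<le> rB \<beta>" by blast
  have bR: "\<beta> \<in> RB" and bE: "endp (B \<beta>) = E" and tb: "t \<in> B \<beta>" using b unfolding SB_def by auto
  have bG: "\<beta> \<in> GB" using b SBG by blast
  show ?thesis
  proof (cases "rB \<beta> = k")
    case True
    then show ?thesis using bR bE tb unfolding E_def k_def by blast
  next
    case False
    then have "k < rB \<beta>" using kb by simp
    then obtain b' where b'G: "b' \<in> GB" and rb': "rB b' = k" using segB[OF bG] by blast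
    have b'R: "b' \<in> RB" and b'E: "endp (B b') = E" using b'G unfolding GB_def by auto
    have "B \<beta> \<subseteq> B b'"
    proof (rule ccontr)
      assume n: "\<not> B \<beta> \<subseteq> B b'"
      then have "B b' \<subseteq> B \<beta>" using nestB[rule_format, OF bR b'R] bE b'E by blast
      then have "B b' \<subset> B \<beta>" using n by blast
      then have "rB \<beta> < rB b'" using decB[OF bG b'G] by blast
      then show False using rb' kb by simp
    qed
    then have "t \<in> B b'" using tb by blast
    then show ?thesis using b'R b'E rb' unfolding E_def k_def by blast
  qed
qed

lemma grouped_props:
  fixes endp :: "'t set \<Rightarrow> 't set"
  assumes gm: "grouped_matching endp RA A RB B M"
    and nestB: "\<forall>b\<in>RB. \<forall>b'\<in>RB. endp (B b) = endp (B b') \<longrightarrow> B b \<subseteq> B b' \<or> B b' \<subseteq> B b"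
    and nestA: "\<forall>a\<in>RA. \<forall>a'\<in>RA. endp (A a) = endp (A a') \<longrightarrow> A a \<subseteq> A a' \<or> A a' \<subseteq> A a"
    and finA: "\<And>t E. finite {a\<in>RA. endp (A a) = E \<and> t \<in> A a}"
    and finB: "\<And>t E. finite {b\<in>RB. endp (B b) = E \<and> t \<in> B b}"
    and cnt: "\<And>t E. card {a\<in>RA. endp (A a) = E \<and> t \<in> A a} \<le> card {b\<in>RB. endp (B b) = E \<and> t \<in> B b}"
    and neA: "\<And>a. a \<in> RA \<Longrightarrow> A a \<noteq> {}"
  shows "injective_matching RA A RB B M \<and> sub_barcode_matching RA A RB B M"
proof -
  obtain rA rB where d: "\<forall>E. decreasing_enum A {a\<in>RA. endp (A a) = E} rA \<and>
             decreasing_enum B {b\<in>RB. endp (B b) = E} rB"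
    and M: "M = {(a, b). a \<in> RA \<and> b \<in> RB \<and> endp (A a) = endp (B b) \<and> rA a = rB b}"
    using gm unfolding grouped_matching_def by blast
  have dA: "\<And>E. decreasing_enum A {a\<in>RA. endp (A a) = E} rA" using d by blast
  have dB: "\<And>E. decreasing_enum B {b\<in>RB. endp (B b) = E} rB" using d by blast
  note P = grouped_partner[OF dA dB nestB nestA finA finB cnt]
  have injA: "\<And>E. inj_on rA {a\<in>RA. endp (A a) = E}" using dA unfolding decreasing_enum_def by blast
  have injB: "\<And>E. inj_on rB {b\<in>RB. endp (B b) = E}" using dB unfolding decreasing_enum_def by blast
  have Msub: "M \<subseteq> RA \<times> RB" unfolding M by blast
  have f1: "\<forall>a b b'. (a, b) \<in> M \<longrightarrow> (a, b') \<in> M \<longrightarrow> b = b'"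
  proof (intro allI impI)
    fix a b b' assume 1: "(a, b) \<in> M" and 2: "(a, b') \<in> M"
    have "b \<in> {b\<in>RB. endp (B b) = endp (A a)}" "b' \<in> {b\<in>RB. endp (B b) = endp (A a)}" "rB b = rB b'"
      using 1 2 unfolding M by auto
    then show "b = b'" using injB[of "endp (A a)"] unfolding inj_on_def by blast
  qed
  have f2: "\<forall>a a' b. (a, b) \<in> M \<longrightarrow> (a', b) \<in> M \<longrightarrow> a = a'"
  proof (intro allI impI)
    fix a a' b assume 1: "(a, b) \<in> M" and 2: "(a', b) \<in> M"
    have "a \<in> {a\<in>RA. endp (A a) = endp (B b)}" "a' \<in> {a\<in>RA. endp (A a) = endp (B b)}" "rA a = rA a'"
      using 1 2 unfolding M by auto
    then show "a = a'" using injA[of "endp (B b)"] unfolding inj_on_def by blast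
  qed
  have sub: "\<forall>(a, b)\<in>M. A a \<subseteq> B b"
  proof (clarify)
    fix a b t assume ab: "(a, b) \<in> M" and ta: "t \<in> A a"
    have aR: "a \<in> RA" using ab unfolding M by blast
    obtain b' where b': "b' \<in> RB" "endp (B b') = endp (A a)" "rB b' = rA a" "t \<in> B b'"
      using P[OF aR ta] by blast
    have "(a, b') \<in> M" unfolding M using aR b' by simp
    then have "b' = b" using f1 ab by blast
    then show "t \<in> B b" using b' by simp
  qed
  have int: "\<forall>(a, b)\<in>M. A a \<inter> B b \<noteq> {}"
  proof (clarify)
    fix a b assume ab: "(a, b) \<in> M" and e: "A a \<inter> B b = {}"
    have "a \<in> RA" using ab unfolding M by blast
    then have "A a \<noteq> {}" by (rule neA)
    moreover have "A a \<subseteq> B b" using sub ab by blast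
    ultimately show False using e by blast
  qed
  have bm: "barcode_matching RA A RB B M"
    unfolding barcode_matching_def using Msub f1 f2 int by blast
  have tot: "\<forall>a\<in>RA. \<exists>b. (a, b) \<in> M"
  proof
    fix a assume aR: "a \<in> RA"
    obtain t where ta: "t \<in> A a" using neA[OF aR] by blast
    obtain b' where b': "b' \<in> RB" "endp (B b') = endp (A a)" "rB b' = rA a" "t \<in> B b'"
      using P[OF aR ta] by blast
    have "(a, b') \<in> M" unfolding M using aR b' by simp
    then show "\<exists>b. (a, b) \<in> M" by blast
  qed
  show ?thesis unfolding injective_matching_def sub_barcode_matching_def using bm tot sub by blast
qed

lemma comp_props:
  assumes M: "injective_matching RA A RB B M \<and> sub_barcode_matching RA A RB B M"
    and N: "injective_matching RB B RC C N \<and> sub_barcode_matching RB B RC C N"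
    and neA: "\<And>a. a \<in> RA \<Longrightarrow> A a \<noteq> {}"
  shows "injective_matching RA A RC C (comp_match A C M N) \<and> sub_barcode_matching RA A RC C (comp_match A C M N)"
proof -
  have Msub: "M \<subseteq> RA \<times> RB" and Mf1: "\<And>a b b'. (a, b) \<in> M \<Longrightarrow> (a, b') \<in> M \<Longrightarrow> b = b'"
    and Mf2: "\<And>a a' b. (a, b) \<in> M \<Longrightarrow> (a', b) \<in> M \<Longrightarrow> a = a'"
    and Mtot: "\<And>a. a \<in> RA \<Longrightarrow> \<exists>b. (a, b) \<in> M"
    and Mss: "\<And>a b. (a, b) \<in> M \<Longrightarrow> A a \<subseteq> B b"
    using M unfolding injective_matching_def sub_barcode_matching_def barcode_matching_def by blast+
  have Nsub: "N \<subseteq> RB \<times> RC" and Nf1: "\<And>a b b'. (a, b) \<in> N \<Longrightarrow> (a, b') \<in> N \<Longrightarrow> b = b'"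
    and Nf2: "\<And>a a' b. (a, b) \<in> N \<Longrightarrow> (a', b) \<in> N \<Longrightarrow> a = a'"
    and Ntot: "\<And>a. a \<in> RB \<Longrightarrow> \<exists>b. (a, b) \<in> N"
    and Nss: "\<And>a b. (a, b) \<in> N \<Longrightarrow> B a \<subseteq> C b"
    using N unfolding injective_matching_def sub_barcode_matching_def barcode_matching_def by blast+
  define K where "K = comp_match A C M N"
  have K: "\<And>a c. (a, c) \<in> K \<longleftrightarrow> (\<exists>b. (a, b) \<in> M \<and> (b, c) \<in> N \<and> A a \<inter> C c \<noteq> {})"
    unfolding K_def comp_match_def by simp
  have Ksub: "K \<subseteq> RA \<times> RC"
  proof
    fix x assume "x \<in> K"
    then obtain a c where x: "x = (a, c)" and "(a, c) \<in> K" by (cases x) auto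
    then obtain b where "(a, b) \<in> M" "(b, c) \<in> N" using K by blast
    then show "x \<in> RA \<times> RC" using x Msub Nsub by blast
  qed
  have f1: "\<forall>a c c'. (a, c) \<in> K \<longrightarrow> (a, c') \<in> K \<longrightarrow> c = c'"
  proof (intro allI impI)
    fix a c c' assume "(a, c) \<in> K" "(a, c') \<in> K"
    then obtain b b' where "(a, b) \<in> M" "(b, c) \<in> N" "(a, b') \<in> M" "(b', c') \<in> N" using K by blast
    then show "c = c'" using Mf1 Nf1 by blast
  qed
  have f2: "\<forall>a a' c. (a, c) \<in> K \<longrightarrow> (a', c) \<in> K \<longrightarrow> a = a'"
  proof (intro allI impI)
    fix a a' c assume "(a, c) \<in> K" "(a', c) \<in> K"
    then obtain b b' where "(a, b) \<in> M" "(b, c) \<in> N" "(a', b') \<in> M" "(b', c) \<in> N" using K by blast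
    then show "a = a'" using Mf2 Nf2 by blast
  qed
  have int: "\<forall>(a, c)\<in>K. A a \<inter> C c \<noteq> {}" using K by blast
  have ss: "\<forall>(a, c)\<in>K. A a \<subseteq> C c"
  proof (clarify)
    fix a c x assume "(a, c) \<in> K" "x \<in> A a"
    then obtain b where "(a, b) \<in> M" "(b, c) \<in> N" using K by blast
    then show "x \<in> C c" using Mss Nss \<open>x \<in> A a\<close> by blast
  qed
  have tot: "\<forall>a\<in>RA. \<exists>c. (a, c) \<in> K"
  proof
    fix a assume aR: "a \<in> RA"
    obtain b where ab: "(a, b) \<in> M" using Mtot[OF aR] by blast
    then have "b \<in> RB" using Msub by blast
    then obtain c where bc: "(b, c) \<in> N" using Ntot by blast
    have "A a \<subseteq> C c" using Mss[OF ab] Nss[OF bc] by blast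
    then have "A a \<inter> C c \<noteq> {}" using neA[OF aR] by blast
    then have "(a, c) \<in> K" using K ab bc by blast
    then show "\<exists>c. (a, c) \<in> K" by blast
  qed
  have "barcode_matching RA A RC C K" unfolding barcode_matching_def using Ksub f1 f2 int by blast
  then show ?thesis unfolding injective_matching_def sub_barcode_matching_def K_def[symmetric]
    using tot ss by blast
qed


lemma pm_hom_facts:
  assumes "pm_hom scV V f scW W g H"
  shows "pers_module scV V f" "pers_module scW W g" "\<And>t x. x \<in> V t \<Longrightarrow> H t x \<in> W t"
    "\<And>t. lin_on scV scW (V t) (H t)"
    "\<And>s t x. s \<le> t \<Longrightarrow> x \<in> V s \<Longrightarrow> H t (f s t x) = g s t (H s x)"
proof -
  note d = assms[unfolded pm_hom_def]
  show "pers_module scV V f" using d by (rule conjunct1)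
  note d2 = d[THEN conjunct2]
  show "pers_module scW W g" using d2 by (rule conjunct1)
  note d3 = d2[THEN conjunct2]
  have m: "\<forall>t. \<forall>x\<in>V t. H t x \<in> W t" using d3 by (rule conjunct1)
  then show "\<And>t x. x \<in> V t \<Longrightarrow> H t x \<in> W t" by blast
  note d4 = d3[THEN conjunct2]
  have a1: "\<forall>t. \<forall>x\<in>V t. \<forall>y\<in>V t. H t (x + y) = H t x + H t y" using d4 by (rule conjunct1)
  note d5 = d4[THEN conjunct2]
  have a2: "\<forall>t c. \<forall>x\<in>V t. H t (scV c x) = scW c (H t x)" using d5 by (rule conjunct1)
  have a3: "\<forall>s t. s \<le> t \<longrightarrow> (\<forall>x\<in>V s. H t (f s t x) = g s t (H s x))" using d5 by (rule conjunct2)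
  show "\<And>t. lin_on scV scW (V t) (H t)" unfolding lin_on_def using a1 a2 by blast
  show "\<And>s t x. s \<le> t \<Longrightarrow> x \<in> V s \<Longrightarrow> H t (f s t x) = g s t (H s x)" using a3 by blast
qed

lemma barcode_nonempty:
  assumes "is_barcode sc V f R I" "\<beta> \<in> R"
  shows "I \<beta> \<noteq> {}"
proof -
  have "\<forall>\<beta>\<in>R. interval (I \<beta>)" using assms(1) unfolding is_barcode_iff by (rule conjunct1)
  then have "interval (I \<beta>)" using assms(2) by blast
  then show ?thesis unfolding interval_def by (rule conjunct1)
qed

lemma nest_ue:
  assumes "\<forall>\<beta>\<in>R. interval (I \<beta>)"
  shows "\<forall>b\<in>R. \<forall>b'\<in>R. upper_end (I b) = upper_end (I b') \<longrightarrow> I b \<subseteq> I b' \<or> I b' \<subseteq> I b"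
proof (intro ballI impI)
  fix b b' assume "b \<in> R" "b' \<in> R" "upper_end (I b) = upper_end (I b')"
  then show "I b \<subseteq> I b' \<or> I b' \<subseteq> I b" using assms by (intro same_ue_nested) auto
qed

lemma nest_le:
  assumes "\<forall>\<beta>\<in>R. interval (I \<beta>)"
  shows "\<forall>b\<in>R. \<forall>b'\<in>R. lower_end (I b) = lower_end (I b') \<longrightarrow> I b \<subseteq> I b' \<or> I b' \<subseteq> I b"
proof (intro ballI impI)
  fix b b' assume "b \<in> R" "b' \<in> R" "lower_end (I b) = lower_end (I b')"
  then show "I b \<subseteq> I b' \<or> I b' \<subseteq> I b" using assms by (intro same_le_nested) auto
qed

lemma fin_group:
  assumes vs: "vector_space sc" and pf: "pfd sc V" and XV: "\<And>t. X t \<subseteq> V t"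
    and e: "bc_e sc X f R I e"
  shows "finite {\<beta>\<in>R. endp (I \<beta>) = E \<and> t \<in> I \<beta>}"
proof -
  have "finite {\<beta>\<in>R. t \<in> I \<beta>}" by (rule bars_finite[OF vs pf XV e])
  then show ?thesis by (rule finite_subset[rotated]) blast
qed

theorem lemma3p6:
  fixes scU :: "'k::field \<Rightarrow> 'u::ab_group_add \<Rightarrow> 'u"
    and scV :: "'k \<Rightarrow> 'v::ab_group_add \<Rightarrow> 'v"
    and scT :: "'k \<Rightarrow> 'x::ab_group_add \<Rightarrow> 'x"
    and scW :: "'k \<Rightarrow> 'w::ab_group_add \<Rightarrow> 'w"
    and U :: "'t::linorder \<Rightarrow> 'u set" and fU :: "'t \<Rightarrow> 't \<Rightarrow> 'u \<Rightarrow> 'u"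
    and V :: "'t \<Rightarrow> 'v set" and fV :: "'t \<Rightarrow> 't \<Rightarrow> 'v \<Rightarrow> 'v"
    and T' :: "'t \<Rightarrow> 'x set" and fT :: "'t \<Rightarrow> 't \<Rightarrow> 'x \<Rightarrow> 'x"
    and W :: "'t \<Rightarrow> 'w set" and fW :: "'t \<Rightarrow> 't \<Rightarrow> 'w \<Rightarrow> 'w"
    and F :: "'t \<Rightarrow> 'u \<Rightarrow> 'v" and G :: "'t \<Rightarrow> 'x \<Rightarrow> 'w"
    and \<phi>1 :: "'t \<Rightarrow> 'x \<Rightarrow> 'u" and \<phi>2 :: "'t \<Rightarrow> 'v \<Rightarrow> 'w"
    and RG :: "'g set" and bG :: "'g \<Rightarrow> 't set"
    and RF :: "'f set" and bF :: "'f \<Rightarrow> 't set"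
    and RP :: "'p set" and bP :: "'p \<Rightarrow> 't set"
    and RQ :: "'q set" and bQ :: "'q \<Rightarrow> 't set"
    and J_Fphi :: "('p \<times> 'f) set" and Q_phistar :: "('p \<times> 'g) set"
    and Q_phiF :: "('f \<times> 'q) set" and J_phistar :: "('g \<times> 'q) set"
  assumes pfd: "pfd scU U" "pfd scV V" "pfd scT T'" "pfd scW W"
    and homF: "pm_hom scU U fU scV V fV F"
    and homG: "pm_hom scT T' fT scW W fW G"
    and hom\<phi>1: "pm_hom scT T' fT scU U fU \<phi>1"
    and hom\<phi>2: "pm_hom scV V fV scW W fW \<phi>2"
    and comp: "\<forall>t. \<forall>x\<in>T' t. G t x = \<phi>2 t (F t (\<phi>1 t x))"
    \<comment> \<open>barcodes of im G, im F, im F_\<phi> and im \<phi>_F\<close>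
    and barG: "is_barcode scW (img G T') fW RG bG"
    and barF: "is_barcode scV (img F U) fV RF bF"
    and barP: "is_barcode scV (img F (img \<phi>1 T')) fV RP bP"
    and barQ: "is_barcode scW (img \<phi>2 (img F U)) fW RQ bQ"
    \<comment> \<open>the induced matchings J_{F_\<phi>}, Q_{\<phi>_*}, Q_{\<phi>_F}, J_{\<phi>_*}\<close>
    and JFphi: "mono_induced_matching RP bP RF bF J_Fphi"
    and Qphistar: "epi_induced_matching RP bP RG bG Q_phistar"
    and QphiF: "epi_induced_matching RF bF RQ bQ Q_phiF"
    and Jphistar: "mono_induced_matching RG bG RQ bQ J_phistar"
  shows "injective_matching RG bG RF bF (comp_match bG bF (converse Q_phistar) J_Fphi) \<and>
         sub_barcode_matching RG bG RF bF (comp_match bG bF (converse Q_phistar) J_Fphi) \<and>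
         injective_matching RG bG RF bF (converse (comp_match bF bG Q_phiF (converse J_phistar))) \<and>
         sub_barcode_matching RG bG RF bF (converse (comp_match bF bG Q_phiF (converse J_phistar)))"
proof -
  note pmU = pm_hom_facts(1)[OF homF]
  note pmV = pm_hom_facts(2)[OF homF]
  note pmT = pm_hom_facts(1)[OF homG]
  note pmW = pm_hom_facts(2)[OF homG]
  note vsV = pm_facts(1)[OF pmV]
  note vsW = pm_facts(1)[OF pmW]
  note Fmap = pm_hom_facts(3)[OF homF]
  note \<phi>1map = pm_hom_facts(3)[OF hom\<phi>1]
  note \<phi>2map = pm_hom_facts(3)[OF hom\<phi>2]
  note \<phi>2lin = pm_hom_facts(4)[OF hom\<phi>2]
  note \<phi>2comm = pm_hom_facts(5)[OF hom\<phi>2]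
  define P where "P = img F (img \<phi>1 T')"
  define FU where "FU = img F U"
  define GT where "GT = img G T'"
  define Q where "Q = img \<phi>2 (img F U)"
  have PFU: "\<And>t. P t \<subseteq> FU t" unfolding P_def FU_def img_def using \<phi>1map by blast
  have FUV: "\<And>t. FU t \<subseteq> V t" unfolding FU_def img_def using Fmap by blast
  have PV: "\<And>t. P t \<subseteq> V t" using PFU FUV by blast
  have GTeq: "\<And>t. GT t = \<phi>2 t ` P t"
    unfolding GT_def P_def img_def image_image
  proof -
    fix t
    show "G t ` T' t = (\<lambda>x. \<phi>2 t (F t (\<phi>1 t x))) ` T' t"
      by (rule image_cong[OF refl]) (use comp in blast)
  qed
  have Qeq: "\<And>t. Q t = \<phi>2 t ` FU t" unfolding Q_def FU_def img_def ..
  have GTQ: "\<And>t. GT t \<subseteq> Q t" unfolding GTeq Qeq using PFU by blast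
  have QW: "\<And>t. Q t \<subseteq> W t" unfolding Qeq using FUV \<phi>2map by blast
  have "(\<forall>\<beta>\<in>RG. interval (bG \<beta>)) \<and> (\<exists>e. bc_e scW GT fW RG bG e)"
    using barG unfolding is_barcode_iff GT_def .
  then obtain eG where iG: "\<forall>\<beta>\<in>RG. interval (bG \<beta>)" and eG: "bc_e scW GT fW RG bG eG" by blast
  have "(\<forall>\<beta>\<in>RF. interval (bF \<beta>)) \<and> (\<exists>e. bc_e scV FU fV RF bF e)"
    using barF unfolding is_barcode_iff FU_def .
  then obtain eF where iF: "\<forall>\<beta>\<in>RF. interval (bF \<beta>)" and eF: "bc_e scV FU fV RF bF eF" by blast
  have "(\<forall>\<beta>\<in>RP. interval (bP \<beta>)) \<and> (\<exists>e. bc_e scV P fV RP bP e)"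
    using barP unfolding is_barcode_iff P_def .
  then obtain eP where iP: "\<forall>\<beta>\<in>RP. interval (bP \<beta>)" and eP: "bc_e scV P fV RP bP eP" by blast
  have "(\<forall>\<beta>\<in>RQ. interval (bQ \<beta>)) \<and> (\<exists>e. bc_e scW Q fW RQ bQ e)"
    using barQ unfolding is_barcode_iff Q_def .
  then obtain eQ where iQ: "\<forall>\<beta>\<in>RQ. interval (bQ \<beta>)" and eQ: "bc_e scW Q fW RQ bQ eQ" by blast
  have neG: "\<And>a. a \<in> RG \<Longrightarrow> bG a \<noteq> {}" by (rule barcode_nonempty[OF barG])
  have neP: "\<And>a. a \<in> RP \<Longrightarrow> bP a \<noteq> {}" by (rule barcode_nonempty[OF barP])
  have neQ: "\<And>a. a \<in> RQ \<Longrightarrow> bQ a \<noteq> {}" by (rule barcode_nonempty[OF barQ])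
  have finG: "\<And>endp t E. finite {\<beta>\<in>RG. endp (bG \<beta>) = E \<and> t \<in> bG \<beta>}"
    by (rule fin_group[OF vsW pfd(4) _ eG]) (use GTQ QW in blast)
  have finF: "\<And>endp t E. finite {\<beta>\<in>RF. endp (bF \<beta>) = E \<and> t \<in> bF \<beta>}"
    by (rule fin_group[OF vsV pfd(2) FUV eF])
  have finP: "\<And>endp t E. finite {\<beta>\<in>RP. endp (bP \<beta>) = E \<and> t \<in> bP \<beta>}"
    by (rule fin_group[OF vsV pfd(2) PV eP])
  have finQ: "\<And>endp t E. finite {\<beta>\<in>RQ. endp (bQ \<beta>) = E \<and> t \<in> bQ \<beta>}"
    by (rule fin_group[OF vsW pfd(4) QW eQ])
  have c1: "\<And>t E. card {\<alpha>\<in>RP. upper_end (bP \<alpha>) = E \<and> t \<in> bP \<alpha>} \<le> card {\<beta>\<in>RF. upper_end (bF \<beta>) = E \<and> t \<in> bF \<beta>}"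
    by (rule mono_count[OF pmV pfd(2) PFU FUV iP eP iF eF])
  have M1: "injective_matching RP bP RF bF J_Fphi \<and> sub_barcode_matching RP bP RF bF J_Fphi"
    by (rule grouped_props[OF JFphi[unfolded mono_induced_matching_def] nest_ue[OF iF] nest_ue[OF iP] finP finF c1 neP])
  have c2: "\<And>t L. card {\<beta>\<in>RG. lower_end (bG \<beta>) = L \<and> t \<in> bG \<beta>} \<le> card {\<alpha>\<in>RP. lower_end (bP \<alpha>) = L \<and> t \<in> bP \<alpha>}"
    by (rule epi_count[OF pmV pfd(2) pmW pfd(4) PV GTeq \<phi>2lin \<phi>2map \<phi>2comm iP eP iG eG])
  have M2: "injective_matching RG bG RP bP (converse Q_phistar) \<and> sub_barcode_matching RG bG RP bP (converse Q_phistar)"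
    by (rule grouped_props[OF grouped_conv[OF Qphistar[unfolded epi_induced_matching_def]] nest_le[OF iP] nest_le[OF iG] finG finP c2 neG])
  have c3: "\<And>t L. card {\<beta>\<in>RQ. lower_end (bQ \<beta>) = L \<and> t \<in> bQ \<beta>} \<le> card {\<alpha>\<in>RF. lower_end (bF \<alpha>) = L \<and> t \<in> bF \<alpha>}"
    by (rule epi_count[OF pmV pfd(2) pmW pfd(4) FUV Qeq \<phi>2lin \<phi>2map \<phi>2comm iF eF iQ eQ])
  have M3: "injective_matching RQ bQ RF bF (converse Q_phiF) \<and> sub_barcode_matching RQ bQ RF bF (converse Q_phiF)"
    by (rule grouped_props[OF grouped_conv[OF QphiF[unfolded epi_induced_matching_def]] nest_le[OF iF] nest_le[OF iQ] finQ finF c3 neQ])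
  have c4: "\<And>t E. card {\<alpha>\<in>RG. upper_end (bG \<alpha>) = E \<and> t \<in> bG \<alpha>} \<le> card {\<beta>\<in>RQ. upper_end (bQ \<beta>) = E \<and> t \<in> bQ \<beta>}"
    by (rule mono_count[OF pmW pfd(4) GTQ QW iG eG iQ eQ])
  have M4: "injective_matching RG bG RQ bQ J_phistar \<and> sub_barcode_matching RG bG RQ bQ J_phistar"
    by (rule grouped_props[OF Jphistar[unfolded mono_induced_matching_def] nest_ue[OF iQ] nest_ue[OF iG] finG finQ c4 neG])
  have R1: "injective_matching RG bG RF bF (comp_match bG bF (converse Q_phistar) J_Fphi) \<and>
         sub_barcode_matching RG bG RF bF (comp_match bG bF (converse Q_phistar) J_Fphi)"
    by (rule comp_props[OF M2 M1 neG])
  have eq: "converse (comp_match bF bG Q_phiF (converse J_phistar)) = comp_match bG bF J_phistar (converse Q_phiF)"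
  proof (rule set_eqI)
    fix x :: "'g \<times> 'f"
    obtain a c where x: "x = (a, c)" by (cases x)
    have "(a, c) \<in> converse (comp_match bF bG Q_phiF (converse J_phistar)) \<longleftrightarrow>
        (\<exists>b. (c, b) \<in> Q_phiF \<and> (a, b) \<in> J_phistar \<and> bF c \<inter> bG a \<noteq> {})"
      unfolding comp_match_def by simp
    also have "\<dots> \<longleftrightarrow> (a, c) \<in> comp_match bG bF J_phistar (converse Q_phiF)"
      unfolding comp_match_def by (auto simp: Int_commute)
    finally show "x \<in> converse (comp_match bF bG Q_phiF (converse J_phistar)) \<longleftrightarrow>
        x \<in> comp_match bG bF J_phistar (converse Q_phiF)" using x by simp
  qed
  have R2: "injective_matching RG bG RF bF (comp_match bG bF J_phistar (converse Q_phiF)) \<and>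
         sub_barcode_matching RG bG RF bF (comp_match bG bF J_phistar (converse Q_phiF))"
    by (rule comp_props[OF M4 M3 neG])
  show ?thesis unfolding eq using R1 R2 by (intro conjI) (erule conjE, assumption)+
qed

end
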